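(* Let $q$ be a primitive $n$-th root of unity. There is a Hopf algebra duality pairing between ${\mathfrak c}_q[SL_2]$ and ${\mathfrak u}_q(sl_2)$ (the pairing of the co-double bosonisation with the double bosonisation, determined factorwise by $\langle X,F\rangle=1$, $\langle t,K\rangle=q$, $\langle Y,E\rangle=1$) under which, for $0\le i,j,k,i',j',k'\le n-1$, $$\langle X^it^jY^k,\;F^{i'}K^{j'}E^{k'}\rangle=\delta_{i,i'}\delta_{k,k'}\,q^{jj'}\,[i]_{q^{-1}}!\,[k]_q!.$$ Consequently $\Big\{\dfrac{X^i\delta_j(t)Y^k}{[i]_{q^{-1}}![k]_q!}\Big\}_{0\le i,j,k<n}$ is a dual basis to the basis $\{F^iK^jE^k\}_{0\le i,j,k<n}$ of ${\mathfrak u}_q(sl_2)$, where $\delta_j(t)=\frac1n\sum_{l=0}^{n-1}q^{-jl}t^l$.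
   Context: ${\mathfrak c}_q[SL_2]$ is the Hopf algebra generated by $X,t,Y$ with $X^n=Y^n=0$, $t^n=1$, $YX=XY$, $Xt=qtX$, $Yt=qtY$, $\Delta t=q\sum_{a=0}^{n-2}(q-1)^{a-1}(1-q^{-a-1})tY^a\otimes X^at$, $\Delta X=X\otimes1+\sum_{a=0}^{n-2}(q-1)^atY^a\otimes X^{a+1}$, $\Delta Y=1\otimes Y+\sum_{a=0}^{n-2}(1-q^{-1})^aY^{a+1}\otimes X^at$; it has basis $\{X^it^jY^k\}_{0\le i,j,k<n}$. ${\mathfrak u}_q(sl_2)$ is the Hopf algebra generated by $E,F,K$ with $E^n=F^n=0$, $K^n=1$, $KEK^{-1}=q^{-1}E$, $KFK^{-1}=qF$, $EF-FE=K-K^{-1}$, $\Delta K=K\otimes K$, $\Delta F=F\otimes1+K^{-1}\otimes F$, $\Delta E=E\otimes K+1\otimes E$; it has PBW basis $\{F^iK^jE^k\}_{0\le i,j,k<n}$. $[i]_q=(1-q^i)/(1-q)$, $[i]_q!=[i]_q[i-1]_q\cdots[1]_q$, $[0]_q!=1$. *)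

theory Defs
  imports Complex_Main
begin

text \<open>Elements of the free algebra over an alphabet 'a (with coefficients in the complex
numbers) are represented as coefficient functions on words; all elements used below have
finite support. Elements of the tensor square are coefficient functions on pairs of words.\<close>

type_synonym 'a fa = "'a list \<Rightarrow> complex"
type_synonym 'a fa2 = "'a list \<Rightarrow> 'a list \<Rightarrow> complex"

definition fa_word :: "'a list \<Rightarrow> 'a fa" where
  "fa_word w = (\<lambda>u. if u = w then 1 else 0)"

definition fa_mult :: "'a fa \<Rightarrow> 'a fa \<Rightarrow> 'a fa" where
  "fa_mult f g = (\<lambda>w. \<Sum>i\<le>length w. f (take i w) * g (drop i w))"

definition tens :: "'a fa \<Rightarrow> 'a fa \<Rightarrow> 'a fa2" where
  "tens f g = (\<lambda>u v. f u * g v)"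

definition fa2_mult :: "'a fa2 \<Rightarrow> 'a fa2 \<Rightarrow> 'a fa2" where
  "fa2_mult D E = (\<lambda>u v. \<Sum>i\<le>length u. \<Sum>j\<le>length v.
      D (take i u) (take j v) * E (drop i u) (drop j v))"

definition fa2_one :: "'a fa2" where
  "fa2_one = tens (fa_word []) (fa_word [])"

primrec coprodW :: "('a \<Rightarrow> 'a fa2) \<Rightarrow> 'a list \<Rightarrow> 'a fa2" where
  "coprodW d [] = fa2_one"
| "coprodW d (x # w) = fa2_mult (d x) (coprodW d w)"

definition counitW :: "('a \<Rightarrow> complex) \<Rightarrow> 'a list \<Rightarrow> complex" where
  "counitW e w = prod_list (map e w)"

definition supp :: "('b \<Rightarrow> complex) \<Rightarrow> 'b set" where
  "supp f = {w. f w \<noteq> 0}"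

definition supp2 :: "('b \<Rightarrow> 'c \<Rightarrow> complex) \<Rightarrow> ('b \<times> 'c) set" where
  "supp2 D = {(u, v). D u v \<noteq> 0}"

definition qint :: "complex \<Rightarrow> nat \<Rightarrow> complex" where
  "qint q i = (1 - q ^ i) / (1 - q)"

definition qfact :: "complex \<Rightarrow> nat \<Rightarrow> complex" where
  "qfact q i = (\<Prod>m\<in>{1..i}. qint q m)"

definition primitive_root_of_unity :: "nat \<Rightarrow> complex \<Rightarrow> bool" where
  "primitive_root_of_unity n q \<longleftrightarrow> 0 < n \<and> q ^ n = 1 \<and> (\<forall>m. 0 < m \<and> m < n \<longrightarrow> q ^ m \<noteq> 1)"

section \<open>The Hopf algebra c_q[SL_2] (generators X, t, Y)\<close>

datatype genA = GX | GT | GY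

fun coprodA_gen :: "complex \<Rightarrow> nat \<Rightarrow> genA \<Rightarrow> genA fa2" where
  "coprodA_gen q n GX = (\<lambda>u v. tens (fa_word [GX]) (fa_word []) u v
      + (\<Sum>a\<in>{0..<n-1}. (q - 1) ^ a *
           tens (fa_word (GT # replicate a GY)) (fa_word (replicate (a + 1) GX)) u v))"
| "coprodA_gen q n GT = (\<lambda>u v.
      (\<Sum>a\<in>{0..<n-1}. q * (q - 1) powi (int a - 1) * (1 - inverse q ^ (a + 1)) *
           tens (fa_word (GT # replicate a GY)) (fa_word (replicate a GX @ [GT])) u v))"
| "coprodA_gen q n GY = (\<lambda>u v. tens (fa_word []) (fa_word [GY]) u v
      + (\<Sum>a\<in>{0..<n-1}. (1 - inverse q) ^ a *
           tens (fa_word (replicate (a + 1) GY)) (fa_word (replicate a GX @ [GT])) u v))"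

definition coprodA :: "complex \<Rightarrow> nat \<Rightarrow> genA list \<Rightarrow> genA fa2" where
  "coprodA q n = coprodW (coprodA_gen q n)"

fun counitA_gen :: "genA \<Rightarrow> complex" where
  "counitA_gen GX = 0" | "counitA_gen GT = 1" | "counitA_gen GY = 0"

definition counitA :: "genA list \<Rightarrow> complex" where
  "counitA = counitW counitA_gen"

definition relsA :: "complex \<Rightarrow> nat \<Rightarrow> genA fa set" where
  "relsA q n = {
     fa_word (replicate n GX),
     fa_word (replicate n GY),
     (\<lambda>w. fa_word (replicate n GT) w - fa_word [] w),
     (\<lambda>w. fa_word [GY, GX] w - fa_word [GX, GY] w),
     (\<lambda>w. fa_word [GX, GT] w - q * fa_word [GT, GX] w),
     (\<lambda>w. fa_word [GY, GT] w - q * fa_word [GT, GY] w)}"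

definition monoA :: "nat \<Rightarrow> nat \<Rightarrow> nat \<Rightarrow> genA list" where
  "monoA i j k = replicate i GX @ replicate j GT @ replicate k GY"

section \<open>The Hopf algebra u_q(sl_2) (generators E, F, K)\<close>

datatype genU = GF | GK | GE

text \<open>Since K^n = 1, the inverse K^{-1} is K^{n-1}.\<close>
fun coprodU_gen :: "nat \<Rightarrow> genU \<Rightarrow> genU fa2" where
  "coprodU_gen n GK = tens (fa_word [GK]) (fa_word [GK])"
| "coprodU_gen n GF = (\<lambda>u v. tens (fa_word [GF]) (fa_word []) u v
      + tens (fa_word (replicate (n - 1) GK)) (fa_word [GF]) u v)"
| "coprodU_gen n GE = (\<lambda>u v. tens (fa_word [GE]) (fa_word [GK]) u v
      + tens (fa_word []) (fa_word [GE]) u v)"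

definition coprodU :: "nat \<Rightarrow> genU list \<Rightarrow> genU fa2" where
  "coprodU n = coprodW (coprodU_gen n)"

fun counitU_gen :: "genU \<Rightarrow> complex" where
  "counitU_gen GF = 0" | "counitU_gen GK = 1" | "counitU_gen GE = 0"

definition counitU :: "genU list \<Rightarrow> complex" where
  "counitU = counitW counitU_gen"

definition relsU :: "complex \<Rightarrow> nat \<Rightarrow> genU fa set" where
  "relsU q n = {
     fa_word (replicate n GE),
     fa_word (replicate n GF),
     (\<lambda>w. fa_word (replicate n GK) w - fa_word [] w),
     (\<lambda>w. fa_word [GK, GE] w - inverse q * fa_word [GE, GK] w),
     (\<lambda>w. fa_word [GK, GF] w - q * fa_word [GF, GK] w),
     (\<lambda>w. fa_word [GE, GF] w - fa_word [GF, GE] w - fa_word [GK] w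
            + fa_word (replicate (n - 1) GK) w)}"

definition monoU :: "nat \<Rightarrow> nat \<Rightarrow> nat \<Rightarrow> genU list" where
  "monoU i j k = replicate i GF @ replicate j GK @ replicate k GE"

text \<open>A pairing is given by its values on pairs of words and extended bilinearly.\<close>

definition pairL :: "(genA list \<Rightarrow> genU list \<Rightarrow> complex) \<Rightarrow> genA fa \<Rightarrow> genU list \<Rightarrow> complex" where
  "pairL P f x = (\<Sum>u\<in>supp f. f u * P u x)"

definition pairR :: "(genA list \<Rightarrow> genU list \<Rightarrow> complex) \<Rightarrow> genA list \<Rightarrow> genU fa \<Rightarrow> complex" where
  "pairR P a g = (\<Sum>v\<in>supp g. g v * P a v)"

definition pair2R :: "(genA list \<Rightarrow> genU list \<Rightarrow> complex) \<Rightarrow> genA list \<Rightarrow> genA list \<Rightarrow> genU fa2 \<Rightarrow> complex" where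
  "pair2R P a b D = (\<Sum>(v1, v2)\<in>supp2 D. D v1 v2 * P a v1 * P b v2)"

definition pair2L :: "(genA list \<Rightarrow> genU list \<Rightarrow> complex) \<Rightarrow> genA fa2 \<Rightarrow> genU list \<Rightarrow> genU list \<Rightarrow> complex" where
  "pair2L P D x y = (\<Sum>(u1, u2)\<in>supp2 D. D u1 u2 * P u1 x * P u2 y)"

text \<open>A Hopf algebra duality pairing between c_q[SL_2] and u_q(sl_2), i.e. a bilinear form on the
free algebras that vanishes on the defining ideals (so descends to the quotients) and satisfies
<ab,x> = <a \<otimes> b, \<Delta>x>, <a,xy> = <\<Delta>a, x \<otimes> y>, <1,x> = \<epsilon>(x), <a,1> = \<epsilon>(a).
(Compatibility with the antipodes is a consequence of these axioms.)\<close>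
definition hopf_pairing :: "complex \<Rightarrow> nat \<Rightarrow> (genA list \<Rightarrow> genU list \<Rightarrow> complex) \<Rightarrow> bool" where
  "hopf_pairing q n P \<longleftrightarrow>
     (\<forall>r\<in>relsA q n. \<forall>u v x. pairL P (fa_mult (fa_mult (fa_word u) r) (fa_word v)) x = 0) \<and>
     (\<forall>r\<in>relsU q n. \<forall>a u v. pairR P a (fa_mult (fa_mult (fa_word u) r) (fa_word v)) = 0) \<and>
     (\<forall>a b x. P (a @ b) x = pair2R P a b (coprodU n x)) \<and>
     (\<forall>a x y. P a (x @ y) = pair2L P (coprodA q n a) x y) \<and>
     (\<forall>x. P [] x = counitU x) \<and>
     (\<forall>a. P a [] = counitA a)"

definition dual_elt :: "complex \<Rightarrow> nat \<Rightarrow> nat \<Rightarrow> nat \<Rightarrow> nat \<Rightarrow> genA fa" where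
  "dual_elt q n i j k = (\<lambda>w. (1 / (qfact (inverse q) i * qfact q k)) *
      (\<Sum>l<n. (1 / of_nat n) * inverse q ^ (j * l) * fa_word (monoA i l k) w))"

end

theory Submission
  imports Defs
begin

definition lin2 :: "'a fa2 \<Rightarrow> ('a list \<Rightarrow> 'a list \<Rightarrow> complex) \<Rightarrow> complex" where
  "lin2 D G = (\<Sum>(u,v)\<in>supp2 D. D u v * G u v)"

lemma lin2_superset:
  assumes "finite S" "supp2 D \<subseteq> S"
  shows "lin2 D G = (\<Sum>(u,v)\<in>S. D u v * G u v)"
  unfolding lin2_def
  by (rule sum.mono_neutral_left) (use assms in \<open>auto simp: supp2_def\<close>)

lemma supp2_tens_sum:
  "supp2 (\<lambda>u v. \<Sum>i\<in>I. c i * tens (fa_word (f i)) (fa_word (g i)) u v) \<subseteq> (\<lambda>i. (f i, g i)) ` I"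
proof
  fix p assume "p \<in> supp2 (\<lambda>u v. \<Sum>i\<in>I. c i * tens (fa_word (f i)) (fa_word (g i)) u v)"
  then obtain u v where p: "p = (u,v)" and nz: "(\<Sum>i\<in>I. c i * tens (fa_word (f i)) (fa_word (g i)) u v) \<noteq> 0"
    by (auto simp: supp2_def)
  from nz obtain i where "i \<in> I" "c i * tens (fa_word (f i)) (fa_word (g i)) u v \<noteq> 0"
    by (meson sum.neutral)
  then show "p \<in> (\<lambda>i. (f i, g i)) ` I" using p
    by (auto simp: tens_def fa_word_def split: if_splits)
qed

lemma lin2_tens_sum:
  assumes "finite I"
  shows "lin2 (\<lambda>u v. \<Sum>i\<in>I. c i * tens (fa_word (f i)) (fa_word (g i)) u v) G
        = (\<Sum>i\<in>I. c i * G (f i) (g i))"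
proof -
  let ?S = "(\<lambda>i. (f i, g i)) ` I"
  have "lin2 (\<lambda>u v. \<Sum>i\<in>I. c i * tens (fa_word (f i)) (fa_word (g i)) u v) G
      = (\<Sum>(u,v)\<in>?S. (\<Sum>i\<in>I. c i * tens (fa_word (f i)) (fa_word (g i)) u v) * G u v)"
    by (rule lin2_superset[OF finite_imageI[OF assms] supp2_tens_sum])
  also have "\<dots> = (\<Sum>p\<in>?S. \<Sum>i\<in>I. c i * (if p = (f i, g i) then G (f i) (g i) else 0))"
  proof (rule sum.cong[OF refl])
    fix p assume "p \<in> ?S"
    obtain u v where p: "p = (u,v)" by (cases p)
    have "(\<Sum>i\<in>I. c i * tens (fa_word (f i)) (fa_word (g i)) u v) * G u v
        = (\<Sum>i\<in>I. c i * (if (u,v) = (f i, g i) then G (f i) (g i) else 0))"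
      unfolding sum_distrib_right
      by (rule sum.cong[OF refl]) (simp add: tens_def fa_word_def)
    then show "(case p of (u, v) \<Rightarrow> (\<Sum>i\<in>I. c i * tens (fa_word (f i)) (fa_word (g i)) u v) * G u v)
        = (\<Sum>i\<in>I. c i * (if p = (f i, g i) then G (f i) (g i) else 0))" using p by simp
  qed
  also have "\<dots> = (\<Sum>i\<in>I. \<Sum>p\<in>?S. c i * (if p = (f i, g i) then G (f i) (g i) else 0))"
    by (rule sum.swap)
  also have "\<dots> = (\<Sum>i\<in>I. c i * G (f i) (g i))"
  proof (rule sum.cong[OF refl])
    fix i assume i: "i \<in> I"
    have "(\<Sum>p\<in>?S. c i * (if p = (f i, g i) then G (f i) (g i) else 0))
        = (\<Sum>p\<in>?S. if p = (f i, g i) then c i * G (f i) (g i) else 0)"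
      by (rule sum.cong) auto
    also have "\<dots> = c i * G (f i) (g i)"
      using i assms by (subst sum.delta) auto
    finally show "(\<Sum>p\<in>?S. c i * (if p = (f i, g i) then G (f i) (g i) else 0)) = c i * G (f i) (g i)" .
  qed
  finally show ?thesis .
qed

lemma finite_supp2_tens_sum:
  "finite I \<Longrightarrow> finite (supp2 (\<lambda>u v. \<Sum>i\<in>I. c i * tens (fa_word (f i)) (fa_word (g i)) u v))"
  by (rule finite_subset[OF supp2_tens_sum]) auto

lemma supp2_add: "supp2 (\<lambda>u v. D u v + E u v) \<subseteq> supp2 D \<union> supp2 E"
  by (auto simp: supp2_def)

lemma lin2_add:
  assumes "finite (supp2 D)" "finite (supp2 E)"
  shows "lin2 (\<lambda>u v. D u v + E u v) G = lin2 D G + lin2 E G"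
proof -
  let ?S = "supp2 D \<union> supp2 E"
  have 1: "lin2 (\<lambda>u v. D u v + E u v) G = (\<Sum>(u,v)\<in>?S. (D u v + E u v) * G u v)"
    by (rule lin2_superset) (use assms supp2_add in auto)
  have 2: "lin2 D G = (\<Sum>(u,v)\<in>?S. D u v * G u v)"
    by (rule lin2_superset) (use assms in auto)
  have 3: "lin2 E G = (\<Sum>(u,v)\<in>?S. E u v * G u v)"
    by (rule lin2_superset) (use assms in auto)
  show ?thesis unfolding 1 2 3
    by (simp add: distrib_right sum.distrib split_def)
qed

lemma lin2_cong:
  "(\<And>u v. (u,v) \<in> supp2 D \<Longrightarrow> G u v = G' u v) \<Longrightarrow> lin2 D G = lin2 D G'"
  unfolding lin2_def by (rule sum.cong) auto

lemma lin2_cmult: "lin2 D (\<lambda>u v. c * G u v) = c * lin2 D G"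
  unfolding lin2_def by (simp add: sum_distrib_left split_def algebra_simps)

lemma lin2_plus: "lin2 D (\<lambda>u v. G u v + H u v) = lin2 D G + lin2 D H"
  unfolding lin2_def by (simp add: sum.distrib split_def algebra_simps)

lemma lin2_swap:
  "lin2 D (\<lambda>u v. lin2 E (F u v)) = lin2 E (\<lambda>u' v'. lin2 D (\<lambda>u v. F u v u' v'))"
  unfolding lin2_def
  by (simp add: split_def sum_distrib_left sum_distrib_right mult.assoc mult.left_commute)
     (rule sum.swap)

lemma lin2_tens: "lin2 (tens (fa_word a) (fa_word b)) G = G a b"
proof -
  have "lin2 (tens (fa_word a) (fa_word b)) G = lin2 (\<lambda>u v. \<Sum>i\<in>{()}. 1 * tens (fa_word a) (fa_word b) u v) G"
    by simp
  also have "\<dots> = G a b" by (subst lin2_tens_sum) auto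
  finally show ?thesis .
qed

lemma lin2_one: "lin2 fa2_one G = G [] []"
  unfolding fa2_one_def by (rule lin2_tens)

lemma finite_supp2_tens: "finite (supp2 (tens (fa_word a) (fa_word b)))"
  using finite_supp2_tens_sum[of "{()}" "\<lambda>_. 1" "\<lambda>_. a" "\<lambda>_. b"] by simp

definition catp :: "('a list \<times> 'a list) \<times> ('a list \<times> 'a list) \<Rightarrow> 'a list \<times> 'a list" where
  "catp x = (fst (fst x) @ fst (snd x), snd (fst x) @ snd (snd x))"

definition hprod :: "'a fa2 \<Rightarrow> 'a fa2 \<Rightarrow> ('a list \<times> 'a list) \<times> ('a list \<times> 'a list) \<Rightarrow> complex" where
  "hprod D E x = D (fst (fst x)) (snd (fst x)) * E (fst (snd x)) (snd (snd x))"

lemma fa2_mult_split: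
  assumes fD: "finite SD" and fE: "finite SE" and sD: "supp2 D \<subseteq> SD" and sE: "supp2 E \<subseteq> SE"
  shows "fa2_mult D E w1 w2 = (\<Sum>x\<in>{x \<in> SD \<times> SE. catp x = (w1,w2)}. hprod D E x)"
proof -
  define \<phi> where "\<phi> = (\<lambda>(i::nat,j::nat). ((take i w1, take j w2), (drop i w1, drop j w2)))"
  define K where "K = {ij \<in> {..length w1} \<times> {..length w2}. \<phi> ij \<in> SD \<times> SE}"
  have "fa2_mult D E w1 w2 = (\<Sum>ij\<in>{..length w1} \<times> {..length w2}. hprod D E (\<phi> ij))"
    unfolding fa2_mult_def sum.cartesian_product hprod_def \<phi>_def by (simp add: split_def)
  also have "\<dots> = (\<Sum>ij\<in>K. hprod D E (\<phi> ij))"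
  proof (rule sum.mono_neutral_right)
    show "\<forall>ij\<in>{..length w1} \<times> {..length w2} - K. hprod D E (\<phi> ij) = 0"
    proof
      fix ij assume "ij \<in> {..length w1} \<times> {..length w2} - K"
      then have "\<phi> ij \<notin> SD \<times> SE" unfolding K_def by auto
      then have "fst (\<phi> ij) \<notin> supp2 D \<or> snd (\<phi> ij) \<notin> supp2 E" using sD sE by (cases "\<phi> ij") auto
      then show "hprod D E (\<phi> ij) = 0" unfolding hprod_def supp2_def
        by (cases "\<phi> ij") auto
    qed
  qed (auto simp: K_def)
  also have "\<dots> = (\<Sum>x\<in>{x \<in> SD \<times> SE. catp x = (w1,w2)}. hprod D E x)"
  proof (rule sum.reindex_bij_witness[where i = "\<lambda>x. (length (fst (fst x)), length (snd (fst x)))" and j = \<phi>])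
    fix x assume "x \<in> {x \<in> SD \<times> SE. catp x = (w1, w2)}"
    then obtain u1 u2 v1 v2 where x: "x = ((u1,u2),(v1,v2))" "u1 @ v1 = w1" "u2 @ v2 = w2" "((u1,u2),(v1,v2)) \<in> SD \<times> SE"
      unfolding catp_def by (cases x) auto
    show "\<phi> (length (fst (fst x)), length (snd (fst x))) = x"
      using x unfolding \<phi>_def by auto
    show "(length (fst (fst x)), length (snd (fst x))) \<in> K"
      using x unfolding K_def \<phi>_def by auto
  next
    fix ij assume ij: "ij \<in> K"
    obtain i j where e: "ij = (i,j)" by (cases ij)
    show "(length (fst (fst (\<phi> ij))), length (snd (fst (\<phi> ij)))) = ij"
      using ij unfolding K_def \<phi>_def e by auto
    show "\<phi> ij \<in> {x \<in> SD \<times> SE. catp x = (w1, w2)}"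
      using ij unfolding K_def \<phi>_def e catp_def by auto
  qed simp
  finally show ?thesis .
qed

lemma supp2_fa2_mult:
  "supp2 (fa2_mult D E) \<subseteq> catp ` (supp2 D \<times> supp2 E)"
proof
  fix w assume "w \<in> supp2 (fa2_mult D E)"
  then obtain w1 w2 where w: "w = (w1,w2)" and nz: "fa2_mult D E w1 w2 \<noteq> 0"
    by (auto simp: supp2_def)
  from nz obtain i where "i \<in> {..length w1}" and
     "(\<Sum>j\<le>length w2. D (take i w1) (take j w2) * E (drop i w1) (drop j w2)) \<noteq> 0"
    unfolding fa2_mult_def by (meson sum.neutral)
  then obtain j where "j \<in> {..length w2}" and
     "D (take i w1) (take j w2) * E (drop i w1) (drop j w2) \<noteq> 0"
    by (meson sum.neutral)
  then have "((take i w1, take j w2), (drop i w1, drop j w2)) \<in> supp2 D \<times> supp2 E"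
    by (auto simp: supp2_def)
  moreover have "catp ((take i w1, take j w2), (drop i w1, drop j w2)) = w"
    using w by (simp add: catp_def)
  ultimately show "w \<in> catp ` (supp2 D \<times> supp2 E)" by force
qed

lemma finite_supp2_fa2_mult:
  "finite (supp2 D) \<Longrightarrow> finite (supp2 E) \<Longrightarrow> finite (supp2 (fa2_mult D E))"
  by (rule finite_subset[OF supp2_fa2_mult]) auto

lemma lin2_fa2_mult:
  assumes fD: "finite (supp2 D)" and fE: "finite (supp2 E)"
  shows "lin2 (fa2_mult D E) G = lin2 D (\<lambda>u1 u2. lin2 E (\<lambda>v1 v2. G (u1 @ v1) (u2 @ v2)))"
proof -
  let ?S = "supp2 D \<times> supp2 E"
  let ?W = "catp ` ?S"
  have fS: "finite ?S" using fD fE by auto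
  have "lin2 (fa2_mult D E) G = (\<Sum>(w1,w2)\<in>?W. fa2_mult D E w1 w2 * G w1 w2)"
    by (rule lin2_superset) (use fS supp2_fa2_mult in auto)
  also have "\<dots> = (\<Sum>w\<in>?W. (\<Sum>x\<in>{x \<in> ?S. catp x = w}. hprod D E x * G (fst (catp x)) (snd (catp x))))"
  proof (rule sum.cong[OF refl])
    fix w assume "w \<in> ?W"
    obtain w1 w2 where w: "w = (w1,w2)" by (cases w)
    have "fa2_mult D E w1 w2 = (\<Sum>x\<in>{x \<in> ?S. catp x = (w1,w2)}. hprod D E x)"
      by (rule fa2_mult_split) (use fD fE in auto)
    then have "fa2_mult D E w1 w2 * G w1 w2 = (\<Sum>x\<in>{x \<in> ?S. catp x = (w1,w2)}. hprod D E x * G w1 w2)"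
      by (simp add: sum_distrib_right)
    also have "\<dots> = (\<Sum>x\<in>{x \<in> ?S. catp x = (w1,w2)}. hprod D E x * G (fst (catp x)) (snd (catp x)))"
      by (rule sum.cong) auto
    finally show "(case w of (w1, w2) \<Rightarrow> fa2_mult D E w1 w2 * G w1 w2) =
       (\<Sum>x\<in>{x \<in> ?S. catp x = w}. hprod D E x * G (fst (catp x)) (snd (catp x)))"
      using w by simp
  qed
  also have "\<dots> = (\<Sum>x\<in>?S. hprod D E x * G (fst (catp x)) (snd (catp x)))"
    by (rule sum.group) (use fS in auto)
  also have "\<dots> = (\<Sum>p\<in>supp2 D. \<Sum>p'\<in>supp2 E. hprod D E (p,p') * G (fst (catp (p,p'))) (snd (catp (p,p'))))"
    by (rule sum.cartesian_product')
  also have "\<dots> = lin2 D (\<lambda>u1 u2. lin2 E (\<lambda>v1 v2. G (u1 @ v1) (u2 @ v2)))"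
    unfolding lin2_def sum_distrib_left
    by (simp add: split_def hprod_def catp_def mult.assoc)
  finally show ?thesis .
qed

lemma finite_supp2_coprodW:
  assumes "\<And>g. finite (supp2 (d g))"
  shows "finite (supp2 (coprodW d w))"
  by (induction w) (auto simp: fa2_one_def finite_supp2_tens assms intro: finite_supp2_fa2_mult)

lemma lin2_coprodW_Cons:
  assumes "\<And>g. finite (supp2 (d g))"
  shows "lin2 (coprodW d (g # w)) G = lin2 (d g) (\<lambda>u1 u2. lin2 (coprodW d w) (\<lambda>v1 v2. G (u1 @ v1) (u2 @ v2)))"
  by (simp add: lin2_fa2_mult assms finite_supp2_coprodW)

lemma lin2_coprodW_Nil: "lin2 (coprodW d []) G = G [] []"
  by (simp add: lin2_one)

lemma lin2_coprodW_append:
  assumes "\<And>g. finite (supp2 (d g))"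
  shows "lin2 (coprodW d (x @ y)) G = lin2 (coprodW d x) (\<lambda>u1 u2. lin2 (coprodW d y) (\<lambda>v1 v2. G (u1 @ v1) (u2 @ v2)))"
proof (induction x arbitrary: G)
  case Nil
  then show ?case by (simp add: lin2_one)
next
  case (Cons g x)
  show ?case
    by (simp only: append_Cons lin2_coprodW_Cons[OF assms] Cons append_assoc)
qed

definition lin1 :: "'a fa \<Rightarrow> ('a list \<Rightarrow> complex) \<Rightarrow> complex" where
  "lin1 f Q = (\<Sum>w\<in>supp f. f w * Q w)"

lemma pairL_lin1: "pairL P f x = lin1 f (\<lambda>w. P w x)"
  unfolding pairL_def lin1_def by simp

lemma pairR_lin1: "pairR P a g = lin1 g (\<lambda>v. P a v)"
  unfolding pairR_def lin1_def by simp

lemma lin1_comb: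
  assumes "finite L"
  shows "lin1 (\<lambda>w. \<Sum>l\<in>L. c l * fa_word (f l) w) Q = (\<Sum>l\<in>L. c l * Q (f l))"
proof -
  let ?S = "f ` L"
  have sub: "supp (\<lambda>w. \<Sum>l\<in>L. c l * fa_word (f l) w) \<subseteq> ?S"
  proof
    fix w assume "w \<in> supp (\<lambda>w. \<Sum>l\<in>L. c l * fa_word (f l) w)"
    then have "(\<Sum>l\<in>L. c l * fa_word (f l) w) \<noteq> 0" by (simp add: supp_def)
    then obtain l where "l \<in> L" "c l * fa_word (f l) w \<noteq> 0" by (meson sum.neutral)
    then show "w \<in> ?S" by (auto simp: fa_word_def split: if_splits)
  qed
  have "lin1 (\<lambda>w. \<Sum>l\<in>L. c l * fa_word (f l) w) Q = (\<Sum>w\<in>?S. (\<Sum>l\<in>L. c l * fa_word (f l) w) * Q w)"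
    unfolding lin1_def
    by (rule sum.mono_neutral_left) (use assms sub in \<open>auto simp: supp_def\<close>)
  also have "\<dots> = (\<Sum>w\<in>?S. \<Sum>l\<in>L. c l * (if w = f l then Q (f l) else 0))"
    by (rule sum.cong[OF refl], unfold sum_distrib_right, rule sum.cong[OF refl]) (simp add: fa_word_def)
  also have "\<dots> = (\<Sum>l\<in>L. \<Sum>w\<in>?S. c l * (if w = f l then Q (f l) else 0))"
    by (rule sum.swap)
  also have "\<dots> = (\<Sum>l\<in>L. c l * Q (f l))"
  proof (rule sum.cong[OF refl])
    fix l assume l: "l \<in> L"
    have "(\<Sum>w\<in>?S. c l * (if w = f l then Q (f l) else 0)) = (\<Sum>w\<in>?S. if w = f l then c l * Q (f l) else 0)"
      by (rule sum.cong) auto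
    also have "\<dots> = c l * Q (f l)" using l assms by (subst sum.delta) auto
    finally show "(\<Sum>w\<in>?S. c l * (if w = f l then Q (f l) else 0)) = c l * Q (f l)" .
  qed
  finally show ?thesis .
qed

lemma lin1_word: "lin1 (fa_word a) Q = Q a"
  using lin1_comb[of "{()}" "\<lambda>_. 1" "\<lambda>_. a" Q] by simp

lemma lin1_word2: "lin1 (\<lambda>w. fa_word a w - c * fa_word b w) Q = Q a - c * Q b"
proof -
  have e: "(\<lambda>w. fa_word a w - c * fa_word b w) = (\<lambda>w. \<Sum>l\<in>{0::nat,1}. [1, -c] ! l * fa_word ([a,b] ! l) w)"
    by auto
  show ?thesis unfolding e by (subst lin1_comb) auto
qed

lemma lin1_word2': "lin1 (\<lambda>w. fa_word a w - fa_word b w) Q = Q a - Q b"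
  using lin1_word2[of a 1 b Q] by simp

lemma lin1_word4: "lin1 (\<lambda>w. fa_word a w - fa_word b w - fa_word c w + fa_word d w) Q = Q a - Q b - Q c + Q d"
proof -
  have e: "(\<lambda>w. fa_word a w - fa_word b w - fa_word c w + fa_word d w)
     = (\<lambda>w. \<Sum>l\<in>{0::nat,1,2,3}. [1, -1, -1, 1] ! l * fa_word ([a,b,c,d] ! l) w)"
    by auto
  show ?thesis unfolding e by (subst lin1_comb) auto
qed

lemma fa_mult_word_left:
  "fa_mult (fa_word u) g w = (if length u \<le> length w \<and> take (length u) w = u then g (drop (length u) w) else 0)"
proof -
  have "fa_mult (fa_word u) g w = (\<Sum>i\<le>length w. if i = length u then (if take i w = u then g (drop i w) else 0) else 0)"
    unfolding fa_mult_def by (rule sum.cong) (auto simp: fa_word_def)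
  also have "\<dots> = (if length u \<le> length w \<and> take (length u) w = u then g (drop (length u) w) else 0)"
    by (subst sum.delta) auto
  finally show ?thesis .
qed

lemma fa_mult_word_right:
  "fa_mult g (fa_word v) w = (if length v \<le> length w \<and> drop (length w - length v) w = v then g (take (length w - length v) w) else 0)"
proof -
  have "fa_mult g (fa_word v) w = (\<Sum>i\<le>length w. if i = length w - length v then (if length v \<le> length w \<and> drop i w = v then g (take i w) else 0) else 0)"
    unfolding fa_mult_def by (rule sum.cong) (auto simp: fa_word_def)
  also have "\<dots> = (if length v \<le> length w \<and> drop (length w - length v) w = v then g (take (length w - length v) w) else 0)"
    by (subst sum.delta) auto
  finally show ?thesis .
qed

lemma fa_sandwich:
  "fa_mult (fa_mult (fa_word u) r) (fa_word v) w = (if \<exists>w'. w = u @ w' @ v then r (THE w'. w = u @ w' @ v) else 0)"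
proof (cases "\<exists>w'. w = u @ w' @ v")
  case True
  then obtain w' where w: "w = u @ w' @ v" by blast
  have th: "(THE w'. w = u @ w' @ v) = w'" using w by auto
  show ?thesis using w th by (simp add: fa_mult_word_left fa_mult_word_right)
next
  case False
  have "fa_mult (fa_mult (fa_word u) r) (fa_word v) w = 0"
  proof (rule ccontr)
    assume nz: "fa_mult (fa_mult (fa_word u) r) (fa_word v) w \<noteq> 0"
    then have h1: "length v \<le> length w" "drop (length w - length v) w = v"
      and nz2: "fa_mult (fa_word u) r (take (length w - length v) w) \<noteq> 0"
      by (auto simp: fa_mult_word_right split: if_splits)
    let ?t = "take (length w - length v) w"
    from nz2 have h2: "length u \<le> length ?t" "take (length u) ?t = u"
      by (auto simp: fa_mult_word_left split: if_splits)
    have "w = ?t @ v" using h1 by (metis append_take_drop_id)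
    moreover have "?t = u @ drop (length u) ?t" using h2 by (metis append_take_drop_id)
    ultimately have "w = u @ drop (length u) ?t @ v" by (metis append.assoc)
    then show False using False by blast
  qed
  then show ?thesis using False by simp
qed

lemma lin1_sandwich:
  "lin1 (fa_mult (fa_mult (fa_word u) r) (fa_word v)) Q = lin1 r (\<lambda>w. Q (u @ w @ v))"
proof -
  let ?M = "fa_mult (fa_mult (fa_word u) r) (fa_word v)"
  have Mv: "?M (u @ w @ v) = r w" for w
    by (subst fa_sandwich) auto
  have sM: "supp ?M = (\<lambda>w. u @ w @ v) ` supp r"
  proof
    show "supp ?M \<subseteq> (\<lambda>w. u @ w @ v) ` supp r"
    proof
      fix w assume "w \<in> supp ?M"
      then have nz: "?M w \<noteq> 0" by (simp add: supp_def)
      then obtain w' where w: "w = u @ w' @ v" by (subst (asm) fa_sandwich) (auto split: if_splits)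
      then show "w \<in> (\<lambda>w. u @ w @ v) ` supp r" using nz Mv by (auto simp: supp_def)
    qed
    show "(\<lambda>w. u @ w @ v) ` supp r \<subseteq> supp ?M" using Mv by (auto simp: supp_def)
  qed
  have inj: "inj_on (\<lambda>w. u @ w @ v) (supp r)" by (auto intro: inj_onI)
  show ?thesis unfolding lin1_def sM sum.reindex[OF inj] by (simp add: Mv)
qed

definition cnt :: "'a \<Rightarrow> 'a list \<Rightarrow> nat" where
  "cnt g w = length (filter (\<lambda>x. x = g) w)"

lemma cnt_simps[simp]:
  "cnt g [] = 0" "cnt g (x # w) = (if x = g then Suc (cnt g w) else cnt g w)"
  "cnt g (u @ v) = cnt g u + cnt g v"
  "cnt g (replicate m x) = (if x = g then m else 0)"
  by (auto simp: cnt_def)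

fun wt :: "complex \<Rightarrow> genA list \<Rightarrow> complex" where
  "wt q [] = 1"
| "wt q (GX # w) = wt q w"
| "wt q (GT # w) = inverse q ^ cnt GX w * wt q w"
| "wt q (GY # w) = q ^ cnt GT w * wt q w"

lemma wt_append:
  "wt q (u @ s) = wt q u * wt q s * q ^ (cnt GY u * cnt GT s) * inverse q ^ (cnt GT u * cnt GX s)"
proof (induction u)
  case Nil then show ?case by simp
next
  case (Cons g u)
  show ?case
  proof (cases g)
    case GX then show ?thesis using Cons by simp
  next
    case GT then show ?thesis using Cons by (simp add: power_add algebra_simps)
  next
    case GY then show ?thesis using Cons by (simp add: power_add algebra_simps)
  qed
qed

lemma qfact_Suc: "qfact q (Suc s) = qfact q s * qint q (Suc s)"
  unfolding qfact_def by (simp add: prod.nat_ivl_Suc')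

lemma qint_Suc: "q \<noteq> 1 \<Longrightarrow> qint q (Suc m) = 1 + q * qint q m"
  unfolding qint_def by (simp add: field_simps)

lemma qint_1: "q \<noteq> 1 \<Longrightarrow> qint q 1 = 1"
  unfolding qint_def by simp

locale prim =
  fixes q :: complex and n :: nat
  assumes n1: "1 < n" and prim: "primitive_root_of_unity n q"
begin

lemma qn: "q ^ n = 1" using prim by (simp add: primitive_root_of_unity_def)
lemma q0: "q \<noteq> 0" using qn n1 by (cases "q = 0") (auto simp: power_0_left)
lemma q1: "q \<noteq> 1"
proof
  assume "q = 1"
  then have "q ^ 1 = 1" by simp
  then show False using prim n1 by (auto simp: primitive_root_of_unity_def)
qed
lemma qpow_ne1: "0 < m \<Longrightarrow> m < n \<Longrightarrow> q ^ m \<noteq> 1"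
  using prim by (auto simp: primitive_root_of_unity_def)
lemma qin: "inverse q ^ n = 1" using qn by (simp add: power_inverse)
lemma qi1: "inverse q \<noteq> 1" using q1 by (metis inverse_1 inverse_inverse_eq)
lemma qipow_ne1: "0 < m \<Longrightarrow> m < n \<Longrightarrow> inverse q ^ m \<noteq> 1"
  using qpow_ne1 by (metis inverse_1 inverse_inverse_eq power_inverse)
lemma qint_n: "qint q n = 0" using qn by (simp add: qint_def)
lemma qint_in: "qint (inverse q) n = 0" using qin by (simp add: qint_def)
lemma qint_ne0: "0 < m \<Longrightarrow> m < n \<Longrightarrow> qint q m \<noteq> 0"
  using qpow_ne1 q1 by (auto simp: qint_def)
lemma qint_i_ne0: "0 < m \<Longrightarrow> m < n \<Longrightarrow> qint (inverse q) m \<noteq> 0"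
  using qipow_ne1 qi1 by (auto simp: qint_def)
lemma qpow_mod: "q ^ m = q ^ (m mod n)"
proof -
  have "q ^ m = q ^ (n * (m div n) + m mod n)" by simp
  also have "\<dots> = (q ^ n) ^ (m div n) * q ^ (m mod n)" by (simp only: power_add power_mult)
  finally show ?thesis by (simp add: qn)
qed

definition Cop :: "genU \<Rightarrow> (nat \<Rightarrow> nat \<Rightarrow> nat \<Rightarrow> complex) \<Rightarrow> nat \<Rightarrow> nat \<Rightarrow> nat \<Rightarrow> complex" where
  "Cop g f i j k = (if i < n \<and> k < n then
      (case g of
         GF \<Rightarrow> (if 0 < i then qint (inverse q) i * f (i - 1) j k else 0)
       | GK \<Rightarrow> q ^ (i + j) * f i j k
       | GE \<Rightarrow> (if 0 < k then qint q k * f i (Suc j) (k - 1) else 0)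
              + (if Suc i < n then (q ^ (i + j) - inverse q ^ j) * f (Suc i) j k else 0))
     else 0)"

lemma Cop_F: "Cop GF f i j k = (if i < n \<and> k < n \<and> 0 < i then qint (inverse q) i * f (i - 1) j k else 0)"
  by (simp add: Cop_def)
lemma Cop_K: "Cop GK f i j k = (if i < n \<and> k < n then q ^ (i + j) * f i j k else 0)"
  by (simp add: Cop_def)
lemma Cop_E: "Cop GE f i j k = (if i < n \<and> k < n then
      (if 0 < k then qint q k * f i (Suc j) (k - 1) else 0)
    + (if Suc i < n then (q ^ (i + j) - inverse q ^ j) * f (Suc i) j k else 0) else 0)"
  by (simp add: Cop_def)

definition e0 :: "nat \<Rightarrow> nat \<Rightarrow> nat \<Rightarrow> complex" where
  "e0 i j k = (if i = 0 \<and> k = 0 then 1 else 0)"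

definition Lam :: "genU list \<Rightarrow> nat \<Rightarrow> nat \<Rightarrow> nat \<Rightarrow> complex" where
  "Lam x = foldr Cop x e0"

lemma Lam_Nil: "Lam [] = e0" by (simp add: Lam_def)
lemma Lam_Cons: "Lam (g # x) = Cop g (Lam x)" by (simp add: Lam_def)
lemma Lam_append: "Lam (x @ y) = foldr Cop x (Lam y)" by (simp add: Lam_def)

definition Pq :: "genA list \<Rightarrow> genU list \<Rightarrow> complex" where
  "Pq a x = (if cnt GX a < n \<and> cnt GY a < n then wt q a * Lam x (cnt GX a) (cnt GT a) (cnt GY a) else 0)"

definition Zf :: "(nat \<Rightarrow> nat \<Rightarrow> nat \<Rightarrow> complex) \<Rightarrow> bool" where
  "Zf f \<longleftrightarrow> (\<forall>i j k. \<not> (i < n \<and> k < n) \<longrightarrow> f i j k = 0)"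

lemma Zf_Cop: "Zf (Cop g f)" by (simp add: Zf_def Cop_def)
lemma Zf_e0: "Zf e0" using n1 by (auto simp: Zf_def e0_def)
lemma Zf_Lam: "Zf (Lam x)" by (cases x) (auto simp: Lam_Nil Lam_Cons Zf_Cop Zf_e0)
lemma Zf_foldr: "Zf f \<Longrightarrow> Zf (foldr Cop u f)" by (cases u) (auto simp: Zf_Cop)

lemma Cop_sum:
  "Cop g (\<lambda>i j k. \<Sum>l\<in>L. c l * F l i j k) i j k = (\<Sum>l\<in>L. c l * Cop g (F l) i j k)"
proof (cases g)
  case GF then show ?thesis by (cases "i < n \<and> k < n \<and> 0 < i") (auto simp: Cop_F sum_distrib_left mult.left_commute)
next
  case GK then show ?thesis by (cases "i < n \<and> k < n") (auto simp: Cop_K sum_distrib_left mult.left_commute)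
next
  case GE then show ?thesis
    by (cases "i < n \<and> k < n"; cases "0 < k"; cases "Suc i < n")
       (auto simp: Cop_E sum_distrib_left mult.left_commute distrib_left sum.distrib)
qed

lemma foldr_Cop_sum:
  "foldr Cop u (\<lambda>i j k. \<Sum>l\<in>L. c l * F l i j k) = (\<lambda>i j k. \<Sum>l\<in>L. c l * foldr Cop u (F l) i j k)"
proof (induction u)
  case Nil then show ?case by simp
next
  case (Cons g u)
  show ?case by (simp add: Cons Cop_sum[of g "\<lambda>l. c l" "\<lambda>l. foldr Cop u (F l)" L, symmetric])
qed

lemma Cop_zero: "Cop g (\<lambda>i j k. 0) = (\<lambda>i j k. 0)"
  by (auto simp: Cop_def fun_eq_iff split: genU.split)

lemma foldr_Cop_zero: "foldr Cop u (\<lambda>i j k. 0) = (\<lambda>i j k. 0)"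
  by (induction u) (auto simp: Cop_zero)

end

lemma qid_EF0:
  fixes a b q :: complex
  assumes "a \<noteq> 0" "b \<noteq> 0" "q \<noteq> 0"
  shows "(a * q * b - inverse b) * (1 - inverse (a * q * q))
       - (a * b - inverse b) * (1 - inverse (a * q)) = (a * q * b - inverse (a * q * b)) * (1 - inverse q)"
  using assms by (simp add: field_simps)
lemma divaux: "x * (y / z) - u * (v / z) = (x * y - u * v) / (z::complex)"
  by (simp add: diff_divide_distrib)
lemma qid_EF:
  fixes a b q :: complex
  assumes "a \<noteq> 0" "b \<noteq> 0" "q \<noteq> 0" "q \<noteq> 1"
  shows "(a * q * b - inverse b) * ((1 - inverse (a * q * q)) / (1 - inverse q))
       - (a * b - inverse b) * ((1 - inverse (a * q)) / (1 - inverse q)) = a * q * b - inverse (a * q * b)"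
proof -
  have nz: "1 - inverse q \<noteq> 0" using assms by (metis eq_iff_diff_eq_0 inverse_1 inverse_inverse_eq)
  have "(a * q * b - inverse b) * ((1 - inverse (a * q * q)) / (1 - inverse q))
       - (a * b - inverse b) * ((1 - inverse (a * q)) / (1 - inverse q))
     = ((a * q * b - inverse b) * (1 - inverse (a * q * q))
       - (a * b - inverse b) * (1 - inverse (a * q))) / (1 - inverse q)"
    by (rule divaux)
  also have "\<dots> = a * q * b - inverse (a * q * b)" using qid_EF0[OF assms(1-3)] nz by simp
  finally show ?thesis .
qed

context prim begin

lemma Cop_scale: "Cop g (\<lambda>i j k. c * f i j k) = (\<lambda>i j k. c * Cop g f i j k)"
proof (intro ext)
  fix i j k
  show "Cop g (\<lambda>i j k. c * f i j k) i j k = c * Cop g f i j k"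
    using Cop_sum[of g "\<lambda>_. c" "\<lambda>_. f" "{()}" i j k] by simp
qed

lemma Cop_add: "Cop g (\<lambda>i j k. f i j k + h i j k) = (\<lambda>i j k. Cop g f i j k + Cop g h i j k)"
proof (intro ext)
  fix i j k
  show "Cop g (\<lambda>i j k. f i j k + h i j k) i j k = Cop g f i j k + Cop g h i j k"
    using Cop_sum[of g "\<lambda>_. 1" "\<lambda>l. if l then f else h" "{True, False}" i j k] by simp
qed

lemma Cop_diff: "Cop g (\<lambda>i j k. f i j k - h i j k) = (\<lambda>i j k. Cop g f i j k - Cop g h i j k)"
proof (intro ext)
  fix i j k
  show "Cop g (\<lambda>i j k. f i j k - h i j k) i j k = Cop g f i j k - Cop g h i j k"
    using Cop_sum[of g "\<lambda>l. if l then 1 else -1" "\<lambda>l. if l then f else h" "{True, False}" i j k] by simp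
qed

lemma KE_comm: "Cop GE (Cop GK f) = (\<lambda>i j k. q * Cop GK (Cop GE f) i j k)"
proof (intro ext)
  fix i j k
  show "Cop GE (Cop GK f) i j k = q * Cop GK (Cop GE f) i j k"
    by (cases "i < n \<and> k < n"; cases "0 < k"; cases "Suc i < n")
       (auto simp: Cop_E Cop_K algebra_simps power_add)
qed

lemma KF_comm: "Cop GK (Cop GF f) = (\<lambda>i j k. q * Cop GF (Cop GK f) i j k)"
proof (intro ext)
  fix i j k
  show "Cop GK (Cop GF f) i j k = q * Cop GF (Cop GK f) i j k"
  proof (cases i)
    case 0 then show ?thesis by (simp add: Cop_F Cop_K)
  next
    case (Suc i')
    then show ?thesis by (cases "i < n \<and> k < n") (auto simp: Cop_F Cop_K algebra_simps)
  qed
qed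

definition KI :: "(nat \<Rightarrow> nat \<Rightarrow> nat \<Rightarrow> complex) \<Rightarrow> nat \<Rightarrow> nat \<Rightarrow> nat \<Rightarrow> complex" where
  "KI f i j k = (if i < n \<and> k < n then inverse q ^ (i + j) * f i j k else 0)"

lemma KI_comm: "Cop GE (KI f) = (\<lambda>i j k. inverse q * KI (Cop GE f) i j k)"
proof (intro ext)
  fix i j k
  show "Cop GE (KI f) i j k = inverse q * KI (Cop GE f) i j k"
    by (cases "i < n \<and> k < n"; cases "0 < k"; cases "Suc i < n")
       (auto simp: Cop_E KI_def algebra_simps power_add)
qed

lemma EF_comm: "Cop GE (Cop GF f) = (\<lambda>i j k. Cop GF (Cop GE f) i j k + Cop GK f i j k - KI f i j k)"
proof (intro ext)
  fix i j k
  show "Cop GE (Cop GF f) i j k = Cop GF (Cop GE f) i j k + Cop GK f i j k - KI f i j k"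
  proof (cases "i < n \<and> k < n")
    case False then show ?thesis by (auto simp: Cop_E Cop_F Cop_K KI_def)
  next
    case True
    then have ik: "i < n" "k < n" by auto
    define c where "c = (\<lambda>i. q ^ (i + j) - inverse q ^ j)"
    have main: "(if Suc i < n then c i * qint (inverse q) (Suc i) else 0)
        - (if 0 < i then qint (inverse q) i * c (i - 1) else 0) = q ^ (i + j) - inverse q ^ (i + j)"
    proof (cases i)
      case 0
      have "qint (inverse q) (Suc 0) = 1" using qint_1[OF qi1] by simp
      then show ?thesis using 0 n1 by (simp add: c_def)
    next
      case (Suc i')
      have gen: "c i * qint (inverse q) (Suc i) - qint (inverse q) i * c (i - 1) = q ^ (i + j) - inverse q ^ (i + j)"
      proof -
        have a: "q ^ i' \<noteq> 0" "q ^ j \<noteq> 0" using q0 by auto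
        have e1: "c i = q ^ i' * q * q ^ j - inverse (q ^ j)"
          using Suc by (simp add: c_def power_inverse power_add mult.commute mult.left_commute)
        have e2: "qint (inverse q) (Suc i) = (1 - inverse (q ^ i' * q * q)) / (1 - inverse q)"
          using Suc by (simp add: qint_def power_inverse mult.commute mult.left_commute)
        have e3: "qint (inverse q) i = (1 - inverse (q ^ i' * q)) / (1 - inverse q)"
          using Suc by (simp add: qint_def power_inverse mult.commute mult.left_commute)
        have e4: "c (i - 1) = q ^ i' * q ^ j - inverse (q ^ j)"
          using Suc by (simp add: c_def power_inverse power_add)
        have e5: "q ^ (i + j) - inverse q ^ (i + j) = q ^ i' * q * q ^ j - inverse (q ^ i' * q * q ^ j)"
          using Suc by (simp add: power_inverse power_add mult.commute mult.left_commute)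
        have "c i * qint (inverse q) (Suc i) - qint (inverse q) i * c (i - 1)
           = (q ^ i' * q * q ^ j - inverse (q ^ j)) * ((1 - inverse (q ^ i' * q * q)) / (1 - inverse q))
             - (q ^ i' * q ^ j - inverse (q ^ j)) * ((1 - inverse (q ^ i' * q)) / (1 - inverse q))"
          unfolding e1 e2 e3 e4 by (simp add: mult.commute)
        also have "\<dots> = q ^ i' * q * q ^ j - inverse (q ^ i' * q * q ^ j)"
          by (rule qid_EF) (use a q0 q1 in auto)
        finally show ?thesis using e5 by simp
      qed
      show ?thesis
      proof (cases "Suc i < n")
        case True then show ?thesis using gen Suc by simp
      next
        case False
        then have "Suc i = n" using ik by auto
        then have "qint (inverse q) (Suc i) = 0" using qint_in by simp
        then show ?thesis using gen Suc False by simp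
      qed
    qed
    have lhs: "Cop GE (Cop GF f) i j k = (if 0 < k then qint q k * (if 0 < i then qint (inverse q) i * f (i - 1) (Suc j) (k - 1) else 0) else 0)
        + (if Suc i < n then c i * qint (inverse q) (Suc i) * f i j k else 0)"
      using ik by (auto simp: Cop_E Cop_F c_def)
    have rhs1: "Cop GF (Cop GE f) i j k = (if 0 < i then qint (inverse q) i * (
        (if 0 < k then qint q k * f (i - 1) (Suc j) (k - 1) else 0) + c (i - 1) * f i j k) else 0)"
      using ik by (cases i) (auto simp: Cop_E Cop_F c_def)
    have "Cop GE (Cop GF f) i j k - Cop GF (Cop GE f) i j k
        = ((if Suc i < n then c i * qint (inverse q) (Suc i) else 0)
        - (if 0 < i then qint (inverse q) i * c (i - 1) else 0)) * f i j k"
      unfolding lhs rhs1 by (auto simp: algebra_simps)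
    also have "\<dots> = (q ^ (i + j) - inverse q ^ (i + j)) * f i j k" using main by simp
    finally show ?thesis using ik by (simp add: Cop_K KI_def algebra_simps)
  qed
qed

lemma Kpow: "Zf f \<Longrightarrow> foldr Cop (replicate s GK) f i j k = q ^ (s * (i + j)) * f i j k"
proof (induction s)
  case 0 then show ?case by simp
next
  case (Suc s)
  show ?case
  proof (cases "i < n \<and> k < n")
    case True
    then show ?thesis using Suc.IH[OF Suc.prems] by (simp add: Cop_K power_add mult.assoc)
  next
    case False
    then have "f i j k = 0" using Suc.prems by (simp add: Zf_def)
    then show ?thesis using False by (auto simp: Cop_K)
  qed
qed

lemma Kn: "Zf f \<Longrightarrow> foldr Cop (replicate n GK) f = f"
proof (intro ext)
  fix i j k assume "Zf f"
  have "q ^ (n * (i + j)) = 1" by (simp add: power_mult qn)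
  then show "foldr Cop (replicate n GK) f i j k = f i j k" using Kpow[OF \<open>Zf f\<close>] by simp
qed

lemma Kn1: "Zf f \<Longrightarrow> foldr Cop (replicate (n - 1) GK) f = KI f"
proof (intro ext)
  fix i j k assume Z: "Zf f"
  have "q ^ ((n - 1) * (i + j)) * q ^ (i + j) = 1"
  proof -
    have "(n - 1) * (i + j) + (i + j) = n * (i + j)" using n1 by (cases n) auto
    then have "q ^ ((n - 1) * (i + j)) * q ^ (i + j) = q ^ (n * (i + j))" by (simp only: power_add[symmetric])
    also have "\<dots> = 1" by (simp add: power_mult qn)
    finally show ?thesis .
  qed
  then have "q ^ ((n - 1) * (i + j)) = inverse (q ^ (i + j))"
    using q0 by (simp add: field_simps)
  then have "q ^ ((n - 1) * (i + j)) = inverse q ^ (i + j)"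
    by (simp add: power_inverse)
  then show "foldr Cop (replicate (n - 1) GK) f i j k = KI f i j k"
    using Kpow[OF Z] Z by (auto simp: KI_def Zf_def)
qed

lemma Fpow: "i < s \<Longrightarrow> foldr Cop (replicate s GF) f i j k = 0"
proof (induction s arbitrary: i)
  case 0 then show ?case by simp
next
  case (Suc s)
  show ?case
  proof (cases i)
    case 0 then show ?thesis by (simp add: Cop_F)
  next
    case (Suc i') then show ?thesis using Suc.IH[of i'] \<open>i < Suc s\<close> by (simp add: Cop_F)
  qed
qed

lemma Fn: "foldr Cop (replicate n GF) f = (\<lambda>i j k. 0)"
proof (intro ext)
  fix i j k
  show "foldr Cop (replicate n GF) f i j k = 0"
  proof (cases "i < n")
    case True then show ?thesis by (rule Fpow)
  next
    case False
    have "replicate n GF = GF # replicate (n - 1) GF" using n1 by (cases n) auto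
    then show ?thesis using False by (simp add: Cop_F)
  qed
qed

end

context prim begin

lemma E_e0: "(Cop GE ^^ s) e0 i j k = (if i = 0 \<and> k = s \<and> s < n then qfact q s else 0)"
proof (induction s arbitrary: i j k)
  case 0 then show ?case using n1 by (simp add: e0_def qfact_def)
next
  case (Suc s)
  have "(Cop GE ^^ Suc s) e0 i j k = Cop GE ((Cop GE ^^ s) e0) i j k" by simp
  also have "\<dots> = (if i < n \<and> k < n \<and> 0 < k then qint q k * (if i = 0 \<and> k - 1 = s \<and> s < n then qfact q s else 0) else 0)"
    by (simp add: Cop_E Suc.IH)
  also have "\<dots> = (if i = 0 \<and> k = Suc s \<and> Suc s < n then qfact q (Suc s) else 0)"
    by (auto simp: qfact_Suc mult.commute)
  finally show ?case .
qed

lemma EK: "(Cop GE ^^ m) (Cop GK f) = (\<lambda>i j k. q ^ m * Cop GK ((Cop GE ^^ m) f) i j k)"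
proof (induction m)
  case 0 then show ?case by simp
next
  case (Suc m)
  have "(Cop GE ^^ Suc m) (Cop GK f) = Cop GE (\<lambda>i j k. q ^ m * Cop GK ((Cop GE ^^ m) f) i j k)"
    using Suc by simp
  also have "\<dots> = (\<lambda>i j k. q ^ m * Cop GE (Cop GK ((Cop GE ^^ m) f)) i j k)"
    by (rule Cop_scale)
  also have "\<dots> = (\<lambda>i j k. q ^ Suc m * Cop GK ((Cop GE ^^ Suc m) f) i j k)"
    by (simp add: KE_comm algebra_simps)
  finally show ?case .
qed

lemma EFm: "(Cop GE ^^ Suc m) (Cop GF f) = (\<lambda>i j k. Cop GF ((Cop GE ^^ Suc m) f) i j k
      + qint q (Suc m) * Cop GK ((Cop GE ^^ m) f) i j k
      - qint (inverse q) (Suc m) * KI ((Cop GE ^^ m) f) i j k)"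
proof (induction m)
  case 0
  have "qint q (Suc 0) = 1" "qint (inverse q) (Suc 0) = 1" using qint_1[OF q1] qint_1[OF qi1] by auto
  then show ?case by (simp add: EF_comm)
next
  case (Suc m)
  let ?A = "Cop GF ((Cop GE ^^ Suc m) f)"
  let ?B = "Cop GK ((Cop GE ^^ m) f)"
  let ?C = "KI ((Cop GE ^^ m) f)"
  have "(Cop GE ^^ Suc (Suc m)) (Cop GF f) = Cop GE ((Cop GE ^^ Suc m) (Cop GF f))" by simp
  also have "\<dots> = Cop GE (\<lambda>i j k. ?A i j k + qint q (Suc m) * ?B i j k - qint (inverse q) (Suc m) * ?C i j k)"
    by (simp only: Suc)
  also have "\<dots> = (\<lambda>i j k. Cop GE ?A i j k + qint q (Suc m) * Cop GE ?B i j k - qint (inverse q) (Suc m) * Cop GE ?C i j k)"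
    by (simp only: Cop_diff Cop_add Cop_scale)
  also have "\<dots> = (\<lambda>i j k. Cop GF ((Cop GE ^^ Suc (Suc m)) f) i j k
      + qint q (Suc (Suc m)) * Cop GK ((Cop GE ^^ Suc m) f) i j k
      - qint (inverse q) (Suc (Suc m)) * KI ((Cop GE ^^ Suc m) f) i j k)"
  proof (intro ext)
    fix i j k
    have a: "Cop GE ?A i j k = Cop GF ((Cop GE ^^ Suc (Suc m)) f) i j k + Cop GK ((Cop GE ^^ Suc m) f) i j k - KI ((Cop GE ^^ Suc m) f) i j k"
      by (simp add: EF_comm)
    have b: "Cop GE ?B i j k = q * Cop GK ((Cop GE ^^ Suc m) f) i j k"
      by (simp add: KE_comm)
    have c: "Cop GE ?C i j k = inverse q * KI ((Cop GE ^^ Suc m) f) i j k"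
      by (simp add: KI_comm)
    show "Cop GE ?A i j k + qint q (Suc m) * Cop GE ?B i j k - qint (inverse q) (Suc m) * Cop GE ?C i j k =
      Cop GF ((Cop GE ^^ Suc (Suc m)) f) i j k
      + qint q (Suc (Suc m)) * Cop GK ((Cop GE ^^ Suc m) f) i j k
      - qint (inverse q) (Suc (Suc m)) * KI ((Cop GE ^^ Suc m) f) i j k"
      unfolding a b c qint_Suc[OF q1, of "Suc m"] qint_Suc[OF qi1, of "Suc m"]
      by (simp add: algebra_simps)
  qed
  finally show ?case .
qed

lemma EnF: "(Cop GE ^^ n) (Cop GF f) = Cop GF ((Cop GE ^^ n) f)"
proof -
  obtain m where m: "n = Suc m" using n1 by (cases n) auto
  have "qint q (Suc m) = 0" "qint (inverse q) (Suc m) = 0" using qint_n qint_in m by auto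
  then show ?thesis using EFm[of m f] m by simp
qed

lemma EnK: "(Cop GE ^^ n) (Cop GK f) = Cop GK ((Cop GE ^^ n) f)"
  using EK[of n f] qn by simp

lemma EnE: "(Cop GE ^^ n) (Cop GE f) = Cop GE ((Cop GE ^^ n) f)"
  by (simp add: funpow_swap1)

lemma En_Lam: "(Cop GE ^^ n) (Lam v) = (\<lambda>i j k. 0)"
proof (induction v)
  case Nil
  show ?case by (auto simp: Lam_Nil E_e0)
next
  case (Cons g v)
  have "(Cop GE ^^ n) (Cop g (Lam v)) = Cop g ((Cop GE ^^ n) (Lam v))"
    by (cases g) (simp_all add: EnF EnK EnE)
  then show ?case by (simp add: Lam_Cons Cons Cop_zero)
qed

lemma foldr_scale: "foldr Cop u (\<lambda>i j k. c * f i j k) = (\<lambda>i j k. c * foldr Cop u f i j k)"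
  using foldr_Cop_sum[of u "\<lambda>_. c" "\<lambda>_. f" "{()}"] by simp

lemma foldr_add: "foldr Cop u (\<lambda>i j k. f i j k + h i j k) = (\<lambda>i j k. foldr Cop u f i j k + foldr Cop u h i j k)"
  using foldr_Cop_sum[of u "\<lambda>_. 1" "\<lambda>l. if l then f else h" "{True, False}"] by simp

lemma foldr_diff: "foldr Cop u (\<lambda>i j k. f i j k - h i j k) = (\<lambda>i j k. foldr Cop u f i j k - foldr Cop u h i j k)"
  using foldr_Cop_sum[of u "\<lambda>l. if l then 1 else -1" "\<lambda>l. if l then f else h" "{True, False}"] by simp

lemma relU_Lam:
  assumes "r \<in> relsU q n"
  shows "lin1 r (\<lambda>w. Lam (u @ w @ v) i j k) = 0"
proof -
  let ?L = "Lam v"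
  have Z: "Zf ?L" by (rule Zf_Lam)
  have LA: "Lam (u @ w @ v) = foldr Cop u (foldr Cop w ?L)" for w by (simp add: Lam_append)
  from assms show ?thesis unfolding relsU_def
  proof (elim insertE)
    assume r: "r = fa_word (replicate n GE)"
    have "foldr Cop (replicate n GE) ?L = (\<lambda>i j k. 0)" using En_Lam by simp
    then show ?thesis by (simp add: r lin1_word LA foldr_Cop_zero)
  next
    assume r: "r = fa_word (replicate n GF)"
    have "(Cop GF ^^ n) ?L = (\<lambda>i j k. 0)" using Fn[of ?L] by simp
    then show ?thesis by (simp add: r lin1_word LA foldr_Cop_zero)
  next
    assume r: "r = (\<lambda>w. fa_word (replicate n GK) w - fa_word [] w)"
    have "(Cop GK ^^ n) ?L = ?L" using Kn[OF Z] by simp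
    then show ?thesis by (simp add: r lin1_word2' LA)
  next
    assume r: "r = (\<lambda>w. fa_word [GK, GE] w - inverse q * fa_word [GE, GK] w)"
    have "foldr Cop [GE, GK] ?L = (\<lambda>i j k. q * foldr Cop [GK, GE] ?L i j k)" by (simp add: KE_comm)
    then show ?thesis using q0 by (simp add: r lin1_word2 LA foldr_scale)
  next
    assume r: "r = (\<lambda>w. fa_word [GK, GF] w - q * fa_word [GF, GK] w)"
    have "foldr Cop [GK, GF] ?L = (\<lambda>i j k. q * foldr Cop [GF, GK] ?L i j k)" by (simp add: KF_comm)
    then show ?thesis by (simp add: r lin1_word2 LA foldr_scale)
  next
    assume r: "r = (\<lambda>w. fa_word [GE, GF] w - fa_word [GF, GE] w - fa_word [GK] w + fa_word (replicate (n - 1) GK) w)"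
    have e1: "Cop GE (Cop GF ?L) = (\<lambda>i j k. Cop GF (Cop GE ?L) i j k + Cop GK ?L i j k - KI ?L i j k)"
      by (rule EF_comm)
    have e2: "(Cop GK ^^ (n - Suc 0)) ?L = KI ?L" using Kn1[OF Z] by simp
    show ?thesis by (simp add: r lin1_word4 LA e1 e2 foldr_add foldr_diff)
  qed simp
qed

lemma lin1_cmult: "lin1 r (\<lambda>w. c * Q w) = c * lin1 r Q"
  unfolding lin1_def by (simp add: sum_distrib_left algebra_simps)

lemma relU_Pq:
  assumes "r \<in> relsU q n"
  shows "pairR Pq a (fa_mult (fa_mult (fa_word u) r) (fa_word v)) = 0"
proof -
  have "pairR Pq a (fa_mult (fa_mult (fa_word u) r) (fa_word v)) = lin1 r (\<lambda>w. Pq a (u @ w @ v))"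
    by (simp add: pairR_lin1 lin1_sandwich)
  also have "\<dots> = 0"
  proof (cases "cnt GX a < n \<and> cnt GY a < n")
    case True
    then have "lin1 r (\<lambda>w. Pq a (u @ w @ v)) = wt q a * lin1 r (\<lambda>w. Lam (u @ w @ v) (cnt GX a) (cnt GT a) (cnt GY a))"
      by (simp add: Pq_def lin1_cmult)
    then show ?thesis using relU_Lam[OF assms] by simp
  next
    case False
    then show ?thesis by (auto simp: Pq_def lin1_def)
  qed
  finally show ?thesis .
qed

end

lemma wt_repX: "wt q (replicate i GX @ w) = wt q w"
  by (induction i) auto

lemma wt_TY: "wt q (replicate j GT @ replicate k GY) = 1"
proof (induction j)
  case 0 show ?case by (induction k) auto
next
  case (Suc j) then show ?case by simp
qed

lemma wt_monoA: "wt q (monoA i j k) = 1"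
  unfolding monoA_def by (simp add: wt_repX wt_TY)

lemma cnt_monoA[simp]: "cnt GX (monoA i j k) = i" "cnt GT (monoA i j k) = j" "cnt GY (monoA i j k) = k"
  by (auto simp: monoA_def)

lemma qfact_prod: "qfact c i = (\<Prod>m<i. qint c (i - m))"
proof (induction i)
  case 0 then show ?case by (simp add: qfact_def)
next
  case (Suc i)
  have "(\<Prod>m<Suc i. qint c (Suc i - m)) = qint c (Suc i) * (\<Prod>m<i. qint c (Suc i - Suc m))"
    using prod.lessThan_Suc_shift[of "\<lambda>m. qint c (Suc i - m)" i] by simp
  also have "\<dots> = qint c (Suc i) * qfact c i" using Suc by simp
  finally show ?case by (simp add: qfact_Suc mult.commute)
qed

lemma wt_only_T: "cnt GX a = 0 \<Longrightarrow> cnt GY a = 0 \<Longrightarrow> wt q a = 1"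
proof (induction a)
  case Nil then show ?case by simp
next
  case (Cons g a) then show ?case by (cases g) (auto split: if_splits)
qed

lemma counitA_cnt: "counitW counitA_gen a = (if cnt GX a = 0 \<and> cnt GY a = 0 then 1 else 0)"
proof (induction a)
  case Nil then show ?case by (simp add: counitW_def)
next
  case (Cons g a) then show ?case by (cases g) (auto simp: counitW_def)
qed

context prim begin

lemma LamF: "i < n \<Longrightarrow> k < n \<Longrightarrow> Lam (replicate s GF @ x) i j k
   = (if s \<le> i then (\<Prod>m<s. qint (inverse q) (i - m)) * Lam x (i - s) j k else 0)"
proof (induction s arbitrary: i)
  case 0 then show ?case by simp
next
  case (Suc s)
  show ?case
  proof (cases i)
    case 0 then show ?thesis by (simp add: Lam_Cons Cop_F)
  next
    case (Suc i')
    have "Lam (replicate (Suc s) GF @ x) i j k = qint (inverse q) i * Lam (replicate s GF @ x) i' j k"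
      using Suc \<open>i < n\<close> \<open>k < n\<close> by (simp add: Lam_Cons Cop_F)
    also have "\<dots> = qint (inverse q) i * (if s \<le> i' then (\<Prod>m<s. qint (inverse q) (i' - m)) * Lam x (i' - s) j k else 0)"
      using Suc.IH[of i'] Suc \<open>i < n\<close> \<open>k < n\<close> by simp
    also have "\<dots> = (if Suc s \<le> i then (\<Prod>m<Suc s. qint (inverse q) (i - m)) * Lam x (i - Suc s) j k else 0)"
    proof -
      have "(\<Prod>m<Suc s. qint (inverse q) (i - m)) = qint (inverse q) i * (\<Prod>m<s. qint (inverse q) (i' - m))"
        using prod.lessThan_Suc_shift[of "\<lambda>m. qint (inverse q) (i - m)" s] Suc by simp
      then show ?thesis using Suc by (simp add: mult.assoc)
    qed
    finally show ?thesis .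
  qed
qed

lemma LamK: "Lam (replicate s GK @ x) i j k = q ^ (s * (i + j)) * Lam x i j k"
  using Kpow[OF Zf_Lam, of s x i j k] by (simp add: Lam_append)

lemma LamE: "Lam (replicate s GE) i j k = (if i = 0 \<and> k = s \<and> s < n then qfact q s else 0)"
  using E_e0[of s i j k] by (simp add: Lam_def)

lemma Lam_monoU:
  assumes "i < n" "k < n"
  shows "Lam (monoU i' j' k') i j k = (if i = i' \<and> k = k' then q ^ (j * j') * qfact (inverse q) i * qfact q k else 0)"
proof -
  have "Lam (monoU i' j' k') i j k = (if i' \<le> i then (\<Prod>m<i'. qint (inverse q) (i - m)) *
      (q ^ (j' * (i - i' + j)) * (if i - i' = 0 \<and> k = k' \<and> k' < n then qfact q k' else 0)) else 0)"
    unfolding monoU_def using assms by (simp add: LamF LamK LamE)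
  also have "\<dots> = (if i = i' \<and> k = k' then q ^ (j * j') * qfact (inverse q) i * qfact q k else 0)"
    using assms by (auto simp: qfact_prod mult.commute)
  finally show ?thesis .
qed

lemma Pq_mono:
  assumes "i < n" "k < n"
  shows "Pq (monoA i j k) (monoU i' j' k') = (if i = i' \<and> k = k' then q ^ (j * j') * qfact (inverse q) i * qfact q k else 0)"
  using assms by (simp add: Pq_def wt_monoA Lam_monoU)

lemma Lam_000: "Lam x 0 0 0 = counitU x"
proof (induction x)
  case Nil then show ?case by (simp add: Lam_Nil e0_def counitU_def counitW_def)
next
  case (Cons g x)
  show ?case
    using Cons n1 by (cases g) (simp_all add: Lam_Cons Cop_def counitU_def counitW_def)
qed

lemma Pq_Nil_left: "Pq [] x = counitU x"
  using n1 by (simp add: Pq_def Lam_000)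

lemma Pq_Nil_right: "Pq a [] = counitA a"
  using n1 by (auto simp: Pq_def Lam_Nil e0_def counitA_def counitA_cnt wt_only_T)

lemma Pq_gens: "Pq [GX] [GF] = 1" "Pq [GT] [GK] = q" "Pq [GY] [GE] = 1"
  using n1 qint_1[OF qi1] qint_1[OF q1] by (simp_all add: Pq_def Lam_Cons Lam_Nil Cop_def e0_def)

lemma Lam_period: "Lam x i (j + n) k = Lam x i j k"
proof (induction x arbitrary: i j k)
  case Nil then show ?case by (simp add: Lam_Nil e0_def)
next
  case (Cons g x)
  have p1: "q ^ (i + (j + n)) = q ^ (i + j)" by (simp add: power_add qn)
  have p2: "inverse q ^ (j + n) = inverse q ^ j" by (simp add: power_add qin)
  have IH2: "Lam x i' (Suc (j + n)) k' = Lam x i' (Suc j) k'" for i' k'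
    using Cons.IH[of i' "Suc j" k'] by simp
  show ?case by (cases g) (simp_all add: Lam_Cons Cop_def Cons.IH p1 p2 IH2)
qed

lemma Pq_swap:
  assumes c: "cnt GX s = cnt GX s'" "cnt GT s = cnt GT s'" "cnt GY s = cnt GY s'"
    and w: "wt q (s @ v) = c * wt q (s' @ v)"
  shows "Pq (u @ s @ v) x = c * Pq (u @ s' @ v) x"
proof -
  have c1: "cnt g (s @ v) = cnt g (s' @ v)" if "g \<in> {GX, GT, GY}" for g
    using c that by auto
  have ww: "wt q (u @ (s @ v)) = c * wt q (u @ (s' @ v))"
    unfolding wt_append[of q u "s @ v"] wt_append[of q u "s' @ v"] w
    using c1 by (simp add: mult_ac)
  show ?thesis using c ww by (simp add: Pq_def)
qed

lemma relA_Pq: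
  assumes "r \<in> relsA q n"
  shows "pairL Pq (fa_mult (fa_mult (fa_word u) r) (fa_word v)) x = 0"
proof -
  have e: "pairL Pq (fa_mult (fa_mult (fa_word u) r) (fa_word v)) x = lin1 r (\<lambda>w. Pq (u @ w @ v) x)"
    by (simp add: pairL_lin1 lin1_sandwich)
  have "lin1 r (\<lambda>w. Pq (u @ w @ v) x) = 0"
  using assms unfolding relsA_def
  proof (elim insertE)
    assume r: "r = fa_word (replicate n GX)"
    show ?thesis by (simp add: r lin1_word Pq_def)
  next
    assume r: "r = fa_word (replicate n GY)"
    show ?thesis by (simp add: r lin1_word Pq_def)
  next
    assume r: "r = (\<lambda>w. fa_word (replicate n GT) w - fa_word [] w)"
    have t1: "wt q (replicate n GT) = 1" by (rule wt_only_T) auto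
    have t2: "inverse q ^ (n * m) = 1" for m by (simp add: power_mult qin)
    have t3: "q ^ (m * (n + p)) = q ^ (m * p)" for m p
    proof -
      have "q ^ (m * (n + p)) = (q ^ n) ^ m * q ^ (m * p)"
        by (simp add: algebra_simps power_add power_mult[symmetric])
      then show ?thesis by (simp add: qn)
    qed
    have w0: "wt q (replicate n GT @ v) = wt q v"
      using wt_append[of q "replicate n GT" v] t1 t2 by simp
    have w1: "wt q (u @ replicate n GT @ v) = wt q (u @ v)"
      using wt_append[of q u "replicate n GT @ v"] wt_append[of q u v] w0 t3 by simp
    have "Pq (u @ replicate n GT @ v) x = Pq (u @ v) x"
      using w1 Lam_period[of x "cnt GX u + cnt GX v" "cnt GT u + cnt GT v"]
      by (simp add: Pq_def algebra_simps)
    then show ?thesis by (simp add: r lin1_word2')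
  next
    assume r: "r = (\<lambda>w. fa_word [GY, GX] w - fa_word [GX, GY] w)"
    have "Pq (u @ [GY, GX] @ v) x = 1 * Pq (u @ [GX, GY] @ v) x"
      by (rule Pq_swap) auto
    then show ?thesis by (simp add: r lin1_word2')
  next
    assume r: "r = (\<lambda>w. fa_word [GX, GT] w - q * fa_word [GT, GX] w)"
    have "Pq (u @ [GX, GT] @ v) x = q * Pq (u @ [GT, GX] @ v) x"
      by (rule Pq_swap) (use q0 in auto)
    then show ?thesis by (simp add: r lin1_word2)
  next
    assume r: "r = (\<lambda>w. fa_word [GY, GT] w - q * fa_word [GT, GY] w)"
    have "Pq (u @ [GY, GT] @ v) x = q * Pq (u @ [GT, GY] @ v) x"
      by (rule Pq_swap) auto
    then show ?thesis by (simp add: r lin1_word2)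
  qed simp
  then show ?thesis using e by simp
qed

lemma dual_basis:
  assumes "i < n" "j < n" "k < n" "i' < n" "j' < n" "k' < n"
  shows "pairL Pq (dual_elt q n i j k) (monoU i' j' k') = (if i = i' \<and> j = j' \<and> k = k' then 1 else 0)"
proof -
  let ?C = "1 / (qfact (inverse q) i * qfact q k)"
  have e: "dual_elt q n i j k = (\<lambda>w. \<Sum>l<n. (?C * (1 / of_nat n) * inverse q ^ (j * l)) * fa_word (monoA i l k) w)"
    unfolding dual_elt_def by (simp add: sum_distrib_left mult.assoc)
  have "pairL Pq (dual_elt q n i j k) (monoU i' j' k')
      = (\<Sum>l<n. (?C * (1 / of_nat n) * inverse q ^ (j * l)) * Pq (monoA i l k) (monoU i' j' k'))"
    unfolding pairL_lin1 e by (subst lin1_comb) auto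
  also have "\<dots> = (\<Sum>l<n. if i = i' \<and> k = k' then ?C * qfact (inverse q) i * qfact q k * (1 / of_nat n) *
        (q ^ j' * inverse q ^ j) ^ l else 0)"
  proof (rule sum.cong[OF refl])
    fix l
    have pw: "inverse q ^ (j * l) * q ^ (l * j') = (q ^ j' * inverse q ^ j) ^ l"
      unfolding power_mult_distrib power_mult[symmetric] by (simp add: mult.commute)
    show "?C * (1 / of_nat n) * inverse q ^ (j * l) * Pq (monoA i l k) (monoU i' j' k') =
        (if i = i' \<and> k = k' then ?C * qfact (inverse q) i * qfact q k * (1 / of_nat n) * (q ^ j' * inverse q ^ j) ^ l else 0)"
      using assms pw[symmetric] by (simp add: Pq_mono mult_ac)
  qed
  also have "\<dots> = (if i = i' \<and> k = k' then ?C * qfact (inverse q) i * qfact q k * (1 / of_nat n) *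
        (\<Sum>l<n. (q ^ j' * inverse q ^ j) ^ l) else 0)"
    by (cases "i = i' \<and> k = k'") (auto simp: sum_distrib_left)
  also have "\<dots> = (if i = i' \<and> j = j' \<and> k = k' then 1 else 0)"
  proof (cases "i = i' \<and> k = k'")
    case False then show ?thesis by auto
  next
    case True
    have nz: "qfact (inverse q) i \<noteq> 0" "qfact q k \<noteq> 0"
      using assms qint_ne0 qint_i_ne0 by (auto simp: qfact_def)
    have C: "?C * qfact (inverse q) i * qfact q k = 1" using nz by simp
    have n0: "(of_nat n :: complex) \<noteq> 0" using n1 by simp
    show ?thesis
    proof (cases "j = j'")
      case True
      have "q ^ j' * inverse q ^ j = 1" using True q0 by (simp add: power_inverse)
      then show ?thesis using True \<open>i = i' \<and> k = k'\<close> C n0 by simp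
    next
      case False
      let ?r = "q ^ j' * inverse q ^ j"
      have r1: "?r \<noteq> 1"
      proof
        assume h: "?r = 1"
        show False
        proof (cases "j < j'")
          case True
          have "?r = q ^ (j' - j)" using True q0
            by (simp add: power_diff power_inverse field_simps)
          then show False using h qpow_ne1[of "j' - j"] True assms by auto
        next
          case False2: False
          then have lt: "j' < j" using \<open>j \<noteq> j'\<close> by auto
          have "?r = inverse (q ^ (j - j'))" using lt q0
            by (simp add: power_diff power_inverse field_simps)
          then show False using h qpow_ne1[of "j - j'"] lt assms by (auto simp: inverse_eq_iff_eq)
        qed
      qed
      have r1': "(q ^ j') ^ n = 1" by (metis power_mult mult.commute qn power_one)
      have r2': "(inverse q ^ j) ^ n = 1" by (metis power_mult mult.commute qin power_one)
      have rn: "?r ^ n = 1" by (simp only: power_mult_distrib r1' r2') simp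
      have "(\<Sum>l<n. ?r ^ l) = 0" using r1 rn by (simp add: sum_gp_strict)
      then show ?thesis using False by simp
    qed
  qed
  finally show ?thesis .
qed

end

lemma qint_add: "c \<noteq> 1 \<Longrightarrow> qint c (a + b) = qint c a + c ^ a * qint c b"
  unfolding qint_def by (simp add: field_simps power_add)

lemma qint_0: "qint c 0 = 0" by (simp add: qint_def)

context prim begin

lemma qpow_n1: "q ^ ((n - 1) * m) = inverse q ^ m"
proof -
  have "(n - 1) * m + m = n * m" using n1 by (cases n) auto
  then have "q ^ ((n - 1) * m) * q ^ m = q ^ (n * m)" by (simp only: power_add[symmetric])
  also have "\<dots> = 1" by (simp add: power_mult qn)
  finally have "q ^ ((n - 1) * m) = inverse (q ^ m)" using q0 by (simp add: field_simps)
  then show ?thesis by (simp add: power_inverse)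
qed

lemma fin_coprodU_gen: "finite (supp2 (coprodU_gen n g))"
  by (cases g) (auto intro!: finite_subset[OF supp2_add] finite_supp2_tens)

lemma lin2_dU_F: "lin2 (coprodU_gen n GF) G = G [GF] [] + G (replicate (n - 1) GK) [GF]"
  by (simp add: lin2_add finite_supp2_tens lin2_tens)
lemma lin2_dU_K: "lin2 (coprodU_gen n GK) G = G [GK] [GK]"
  by (simp add: lin2_tens)
lemma lin2_dU_E: "lin2 (coprodU_gen n GE) G = G [GE] [GK] + G [] [GE]"
  by (simp add: lin2_add finite_supp2_tens lin2_tens)

lemma lin2_coprodU_Cons:
  "lin2 (coprodU n (g # x)) G = lin2 (coprodU_gen n g) (\<lambda>u1 u2. lin2 (coprodU n x) (\<lambda>v1 v2. G (u1 @ v1) (u2 @ v2)))"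
  unfolding coprodU_def by (rule lin2_coprodW_Cons[OF fin_coprodU_gen])

lemma lin2_coprodU_append:
  "lin2 (coprodU n (x @ y)) G = lin2 (coprodU n x) (\<lambda>u1 u2. lin2 (coprodU n y) (\<lambda>v1 v2. G (u1 @ v1) (u2 @ v2)))"
  unfolding coprodU_def by (rule lin2_coprodW_append[OF fin_coprodU_gen])

lemma fin_coprodU: "finite (supp2 (coprodU n x))"
  unfolding coprodU_def by (rule finite_supp2_coprodW[OF fin_coprodU_gen])

definition tw :: "nat \<Rightarrow> nat \<Rightarrow> nat \<Rightarrow> nat \<Rightarrow> nat \<Rightarrow> nat \<Rightarrow> complex" where
  "tw i j k i2 j2 k2 = q ^ (k * j2) * inverse q ^ (j * i2)"

definition SS :: "genU list \<Rightarrow> nat \<Rightarrow> nat \<Rightarrow> nat \<Rightarrow> nat \<Rightarrow> nat \<Rightarrow> nat \<Rightarrow> complex" where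
  "SS x i j k i2 j2 k2 = lin2 (coprodU n x) (\<lambda>v1 v2. Lam v1 i j k * Lam v2 i2 j2 k2)"

lemma Lam_invalid: "\<not> (i < n \<and> k < n) \<Longrightarrow> Lam x i j k = 0"
  using Zf_Lam[of x] by (simp add: Zf_def)

lemma lin2_zero: "lin2 D (\<lambda>u v. 0) = 0"
  by (simp add: lin2_def)

end

context prim begin

lemma qpow_n1': "q ^ ((n - Suc 0) * m) = inverse q ^ m" using qpow_n1 by simp

definition cF :: "nat \<Rightarrow> complex" where "cF i = (if 0 < i then qint (inverse q) i else 0)"
definition cE1 :: "nat \<Rightarrow> complex" where "cE1 k = (if 0 < k then qint q k else 0)"
definition cE2 :: "nat \<Rightarrow> nat \<Rightarrow> complex" where "cE2 i j = (if Suc i < n then q ^ (i + j) - inverse q ^ j else 0)"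

lemma Cop_F_val: "i < n \<Longrightarrow> k < n \<Longrightarrow> Cop GF f i j k = cF i * f (i - 1) j k"
  by (simp add: Cop_F cF_def)
lemma Cop_K_val: "i < n \<Longrightarrow> k < n \<Longrightarrow> Cop GK f i j k = q ^ (i + j) * f i j k"
  by (simp add: Cop_K)
lemma Cop_E_val: "i < n \<Longrightarrow> k < n \<Longrightarrow> Cop GE f i j k = cE1 k * f i (Suc j) (k - 1) + cE2 i j * f (Suc i) j k"
  by (simp add: Cop_E cE1_def cE2_def)

lemma lin2_scale2: "lin2 D (\<lambda>v1 v2. (c1 * A v1) * (c2 * B v2)) = c1 * c2 * lin2 D (\<lambda>v1 v2. A v1 * B v2)"
proof -
  have "(\<lambda>v1 v2. (c1 * A v1) * (c2 * B v2)) = (\<lambda>v1 v2. (c1 * c2) * (A v1 * B v2))"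
    by (simp add: mult_ac)
  then show ?thesis by (simp add: lin2_cmult)
qed

lemma lin2_scale1: "lin2 D (\<lambda>v1 v2. (c1 * A v1) * B v2) = c1 * lin2 D (\<lambda>v1 v2. A v1 * B v2)"
  using lin2_scale2[of D c1 A 1 B] by simp

lemma lin2_scale1': "lin2 D (\<lambda>v1 v2. A v1 * (c2 * B v2)) = c2 * lin2 D (\<lambda>v1 v2. A v1 * B v2)"
  using lin2_scale2[of D 1 A c2 B] by simp

lemma SS_invalid:
  assumes "\<not> (i < n \<and> k < n \<and> i2 < n \<and> k2 < n)"
  shows "SS y i j k i2 j2 k2 = 0" "Lam y (i + i2) (j + j2) (k + k2) = 0"
proof -
  have "(\<lambda>v1 v2. Lam v1 i j k * Lam v2 i2 j2 k2) = (\<lambda>v1 v2. 0)"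
    using assms by (auto simp: Lam_invalid)
  then show "SS y i j k i2 j2 k2 = 0" by (simp add: SS_def lin2_zero)
  show "Lam y (i + i2) (j + j2) (k + k2) = 0" using assms by (auto intro!: Lam_invalid)
qed

lemma SS_Cons: "SS (g # x) i j k i2 j2 k2 = lin2 (coprodU_gen n g) (\<lambda>u1 u2.
    lin2 (coprodU n x) (\<lambda>v1 v2. Lam (u1 @ v1) i j k * Lam (u2 @ v2) i2 j2 k2))"
  unfolding SS_def by (rule lin2_coprodU_Cons)

lemma step_F:
  assumes IH: "\<And>a b c a2 b2 c2. SS x a b c a2 b2 c2 = tw a b c a2 b2 c2 * Lam x (a + a2) (b + b2) (c + c2)"
    and v: "i < n" "k < n" "i2 < n" "k2 < n"
  shows "SS (GF # x) i j k i2 j2 k2 = tw i j k i2 j2 k2 * Lam (GF # x) (i + i2) (j + j2) (k + k2)"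
proof -
  let ?L = "Lam x (i + i2 - 1) (j + j2) (k + k2)"
  let ?t = "tw i j k i2 j2 k2"
  have e1: "lin2 (coprodU n x) (\<lambda>v1 v2. Lam (GF # v1) i j k * Lam v2 i2 j2 k2) = cF i * SS x (i - 1) j k i2 j2 k2"
    using v by (simp add: Lam_Cons Cop_F_val SS_def lin2_scale1)
  have e2: "lin2 (coprodU n x) (\<lambda>v1 v2. Lam (replicate (n - 1) GK @ v1) i j k * Lam (GF # v2) i2 j2 k2)
      = inverse q ^ (i + j) * cF i2 * SS x i j k (i2 - 1) j2 k2"
    using v by (simp add: LamK qpow_n1' Lam_Cons Cop_F_val SS_def lin2_scale2)
  have a1: "cF i * SS x (i - 1) j k i2 j2 k2 = cF i * ?t * ?L"
  proof (cases i)
    case 0 then show ?thesis by (simp add: cF_def)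
  next
    case (Suc i') then show ?thesis by (simp add: IH tw_def)
  qed
  have a2: "inverse q ^ (i + j) * cF i2 * SS x i j k (i2 - 1) j2 k2 = inverse q ^ i * cF i2 * ?t * ?L"
  proof (cases i2)
    case 0 then show ?thesis by (simp add: cF_def)
  next
    case (Suc i2')
    have "i + (i2 - 1) = i + i2 - 1" using Suc by simp
    then show ?thesis using Suc by (simp add: IH tw_def power_add mult_ac)
  qed
  have cc: "cF i + inverse q ^ i * cF i2 = qint (inverse q) (i + i2)"
    using qint_add[OF qi1, of i i2] by (simp add: cF_def qint_0)
  have "SS (GF # x) i j k i2 j2 k2 = cF i * SS x (i - 1) j k i2 j2 k2 + inverse q ^ (i + j) * cF i2 * SS x i j k (i2 - 1) j2 k2"
    unfolding SS_Cons lin2_dU_F using e1 e2 by simp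
  also have "\<dots> = ?t * ?L * (cF i + inverse q ^ i * cF i2)"
    unfolding a1 a2 by (simp add: algebra_simps)
  finally have lhs: "SS (GF # x) i j k i2 j2 k2 = ?t * qint (inverse q) (i + i2) * ?L"
    unfolding cc by (simp add: mult_ac)
  have rhs: "Lam (GF # x) (i + i2) (j + j2) (k + k2) = qint (inverse q) (i + i2) * ?L"
  proof (cases "i + i2 < n \<and> k + k2 < n")
    case True
    then show ?thesis by (cases "i + i2") (simp_all add: Lam_Cons Cop_F qint_0)
  next
    case False
    have "Lam (GF # x) (i + i2) (j + j2) (k + k2) = 0" using False by (auto intro!: Lam_invalid)
    moreover have "qint (inverse q) (i + i2) * ?L = 0"
    proof (cases "k + k2 < n")
      case False then show ?thesis by (simp add: Lam_invalid)
    next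
      case True
      then have "n \<le> i + i2" using \<open>\<not> (i + i2 < n \<and> k + k2 < n)\<close> by auto
      then show ?thesis
      proof (cases "i + i2 = n")
        case True then show ?thesis by (simp add: qint_in)
      next
        case False then have "\<not> (i + i2 - 1 < n)" using \<open>n \<le> i + i2\<close> by auto
        then show ?thesis by (simp add: Lam_invalid)
      qed
    qed
    ultimately show ?thesis by simp
  qed
  show ?thesis using lhs rhs by simp
qed

lemma step_K:
  assumes IH: "\<And>a b c a2 b2 c2. SS x a b c a2 b2 c2 = tw a b c a2 b2 c2 * Lam x (a + a2) (b + b2) (c + c2)"
    and v: "i < n" "k < n" "i2 < n" "k2 < n"
  shows "SS (GK # x) i j k i2 j2 k2 = tw i j k i2 j2 k2 * Lam (GK # x) (i + i2) (j + j2) (k + k2)"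
proof -
  have "SS (GK # x) i j k i2 j2 k2 = q ^ (i + j) * q ^ (i2 + j2) * SS x i j k i2 j2 k2"
    unfolding SS_Cons lin2_dU_K using v by (simp add: Lam_Cons Cop_K_val SS_def lin2_scale2)
  also have "\<dots> = tw i j k i2 j2 k2 * (q ^ (i + i2 + (j + j2)) * Lam x (i + i2) (j + j2) (k + k2))"
    by (simp add: IH power_add mult_ac)
  also have "q ^ (i + i2 + (j + j2)) * Lam x (i + i2) (j + j2) (k + k2) = Lam (GK # x) (i + i2) (j + j2) (k + k2)"
    by (cases "i + i2 < n \<and> k + k2 < n") (auto simp: Lam_Cons Cop_K Lam_invalid)
  finally show ?thesis .
qed

lemma step_E:
  assumes IH: "\<And>a b c a2 b2 c2. SS x a b c a2 b2 c2 = tw a b c a2 b2 c2 * Lam x (a + a2) (b + b2) (c + c2)"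
    and v: "i < n" "k < n" "i2 < n" "k2 < n"
  shows "SS (GE # x) i j k i2 j2 k2 = tw i j k i2 j2 k2 * Lam (GE # x) (i + i2) (j + j2) (k + k2)"
proof -
  let ?t = "tw i j k i2 j2 k2"
  let ?LA = "Lam x (i + i2) (Suc (j + j2)) (k + k2 - 1)"
  let ?LB = "Lam x (Suc (i + i2)) (j + j2) (k + k2)"
  let ?cB = "q ^ (i2 + j2) * cE2 i j + inverse q ^ j * cE2 i2 j2"
  have f1: "(\<lambda>v1 v2. Lam (GE # v1) i j k * Lam (GK # v2) i2 j2 k2) = (\<lambda>v1 v2.
     (q ^ (i2 + j2) * cE1 k) * (Lam v1 i (Suc j) (k - 1) * Lam v2 i2 j2 k2)
   + (q ^ (i2 + j2) * cE2 i j) * (Lam v1 (Suc i) j k * Lam v2 i2 j2 k2))"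
    using v by (simp add: Lam_Cons Cop_E_val Cop_K_val fun_eq_iff algebra_simps)
  have f2: "(\<lambda>v1 v2. Lam v1 i j k * Lam (GE # v2) i2 j2 k2) = (\<lambda>v1 v2.
     cE1 k2 * (Lam v1 i j k * Lam v2 i2 (Suc j2) (k2 - 1))
   + cE2 i2 j2 * (Lam v1 i j k * Lam v2 (Suc i2) j2 k2))"
    using v by (simp add: Lam_Cons Cop_E_val fun_eq_iff algebra_simps)
  have "SS (GE # x) i j k i2 j2 k2 =
      q ^ (i2 + j2) * cE1 k * SS x i (Suc j) (k - 1) i2 j2 k2 + q ^ (i2 + j2) * cE2 i j * SS x (Suc i) j k i2 j2 k2
    + (cE1 k2 * SS x i j k i2 (Suc j2) (k2 - 1) + cE2 i2 j2 * SS x i j k (Suc i2) j2 k2)"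
    unfolding SS_Cons lin2_dU_E by (simp add: f1 f2 lin2_plus lin2_cmult SS_def)
  also have "\<dots> = ?t * (qint q (k + k2) * ?LA + ?cB * ?LB)"
  proof -
    have A1: "q ^ (i2 + j2) * cE1 k * SS x i (Suc j) (k - 1) i2 j2 k2 = ?t * cE1 k * ?LA"
    proof (cases k)
      case 0 then show ?thesis by (simp add: cE1_def)
    next
      case (Suc k')
      have "q ^ (i2 + j2) * tw i (Suc j) k' i2 j2 k2 = ?t"
        using Suc q0 by (simp add: tw_def power_add field_simps)
      moreover have "k' + k2 = k + k2 - 1" using Suc by simp
      ultimately show ?thesis using Suc by (simp add: IH mult_ac)
    qed
    have A2: "cE1 k2 * SS x i j k i2 (Suc j2) (k2 - 1) = ?t * q ^ k * cE1 k2 * ?LA"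
    proof (cases k2)
      case 0 then show ?thesis by (simp add: cE1_def)
    next
      case (Suc k2')
      have "tw i j k i2 (Suc j2) k2' = ?t * q ^ k"
        by (simp add: tw_def power_add mult_ac)
      moreover have "k + k2' = k + k2 - 1" using Suc by simp
      ultimately show ?thesis using Suc by (simp add: IH mult_ac)
    qed
    have B1: "q ^ (i2 + j2) * cE2 i j * SS x (Suc i) j k i2 j2 k2 = ?t * (q ^ (i2 + j2) * cE2 i j) * ?LB"
      by (simp add: IH tw_def mult_ac)
    have B2: "cE2 i2 j2 * SS x i j k (Suc i2) j2 k2 = ?t * (inverse q ^ j * cE2 i2 j2) * ?LB"
      by (simp add: IH tw_def power_add mult_ac)
    have cA: "cE1 k + q ^ k * cE1 k2 = qint q (k + k2)"
      using qint_add[OF q1, of k k2] by (simp add: cE1_def qint_0)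
    show ?thesis unfolding A1 A2 B1 B2 cA[symmetric] by (simp add: algebra_simps)
  qed
  also have "qint q (k + k2) * ?LA + ?cB * ?LB = Lam (GE # x) (i + i2) (j + j2) (k + k2)"
  proof (cases "i + i2 < n \<and> k + k2 < n")
    case True
    have "?cB * ?LB = cE2 (i + i2) (j + j2) * ?LB"
    proof (cases "Suc (i + i2) < n")
      case True
      then have "Suc i < n" "Suc i2 < n" by auto
      then show ?thesis using True q0 by (simp add: cE2_def power_add algebra_simps)
    next
      case False then show ?thesis by (simp add: Lam_invalid)
    qed
    moreover have "qint q (k + k2) = cE1 (k + k2)" by (simp add: cE1_def qint_0)
    ultimately show ?thesis using True by (simp add: Lam_Cons Cop_E_val)
  next
    case False
    have "?LB = 0" using False by (auto intro!: Lam_invalid)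
    moreover have "qint q (k + k2) * ?LA = 0"
    proof (cases "i + i2 < n")
      case False then show ?thesis by (simp add: Lam_invalid)
    next
      case True
      then have "n \<le> k + k2" using \<open>\<not> (i + i2 < n \<and> k + k2 < n)\<close> by auto
      show ?thesis
      proof (cases "k + k2 = n")
        case True then show ?thesis by (simp add: qint_n)
      next
        case False then have "\<not> (k + k2 - 1 < n)" using \<open>n \<le> k + k2\<close> by auto
        then show ?thesis by (simp add: Lam_invalid)
      qed
    qed
    moreover have "Lam (GE # x) (i + i2) (j + j2) (k + k2) = 0" using False by (auto intro!: Lam_invalid)
    ultimately show ?thesis by simp
  qed
  finally show ?thesis .
qed

lemma H3L: "SS x i j k i2 j2 k2 = tw i j k i2 j2 k2 * Lam x (i + i2) (j + j2) (k + k2)"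
proof (induction x arbitrary: i j k i2 j2 k2)
  case Nil
  show ?case by (auto simp: SS_def coprodU_def lin2_one Lam_Nil e0_def tw_def)
next
  case (Cons g x)
  show ?case
  proof (cases "i < n \<and> k < n \<and> i2 < n \<and> k2 < n")
    case True
    then show ?thesis
      by (cases g) (auto intro: step_F[OF Cons.IH] step_K[OF Cons.IH] step_E[OF Cons.IH])
  next
    case False then show ?thesis using SS_invalid[OF False] by simp
  qed
qed

lemma H3_words: "Pq (a @ b) x = pair2R Pq a b (coprodU n x)"
proof -
  have p: "pair2R Pq a b (coprodU n x) = lin2 (coprodU n x) (\<lambda>v1 v2. Pq a v1 * Pq b v2)"
    unfolding pair2R_def lin2_def by (simp add: split_def mult.assoc)
  show ?thesis
  proof (cases "cnt GX a < n \<and> cnt GY a < n \<and> cnt GX b < n \<and> cnt GY b < n")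
    case True
    have "lin2 (coprodU n x) (\<lambda>v1 v2. Pq a v1 * Pq b v2) = wt q a * wt q b *
        SS x (cnt GX a) (cnt GT a) (cnt GY a) (cnt GX b) (cnt GT b) (cnt GY b)"
      using True by (simp add: Pq_def SS_def lin2_scale2)
    also have "\<dots> = Pq (a @ b) x"
      unfolding H3L using True by (auto simp: Pq_def wt_append tw_def mult_ac Lam_invalid)
    finally show ?thesis using p by simp
  next
    case False
    have "(\<lambda>v1 v2. Pq a v1 * Pq b v2) = (\<lambda>v1 v2. 0)" using False by (auto simp: Pq_def)
    moreover have "Pq (a @ b) x = 0" using False by (auto simp: Pq_def)
    ultimately show ?thesis using p by (simp add: lin2_zero)
  qed
qed

end

lemma wt_repY: "wt q (replicate a GY @ w) = q ^ (a * cnt GT w) * wt q w"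
  by (induction a) (auto simp: power_add mult_ac)

lemma lin2_mult: "lin2 D F * lin2 E G = lin2 D (\<lambda>u v. lin2 E (\<lambda>u' v'. F u v * G u' v'))"
proof -
  have "lin2 D F * lin2 E G = lin2 D (\<lambda>u v. F u v * lin2 E G)"
    unfolding lin2_def by (simp add: sum_distrib_right split_def mult_ac)
  also have "\<dots> = lin2 D (\<lambda>u v. lin2 E (\<lambda>u' v'. F u v * G u' v'))"
    by (simp add: lin2_cmult)
  finally show ?thesis .
qed

lemma lin2_4swap:
  "lin2 X (\<lambda>x1 x2. lin2 Y (\<lambda>y1 y2. lin2 G (\<lambda>u1 u2. lin2 W (\<lambda>w1 w2. F x1 x2 y1 y2 u1 u2 w1 w2))))
 = lin2 G (\<lambda>u1 u2. lin2 W (\<lambda>w1 w2. lin2 X (\<lambda>x1 x2. lin2 Y (\<lambda>y1 y2. F x1 x2 y1 y2 u1 u2 w1 w2))))"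
proof -
  have s1: "lin2 Y (\<lambda>y1 y2. lin2 G (\<lambda>u1 u2. lin2 W (\<lambda>w1 w2. F x1 x2 y1 y2 u1 u2 w1 w2)))
     = lin2 G (\<lambda>u1 u2. lin2 W (\<lambda>w1 w2. lin2 Y (\<lambda>y1 y2. F x1 x2 y1 y2 u1 u2 w1 w2)))" for x1 x2
  proof -
    have "lin2 Y (\<lambda>y1 y2. lin2 G (\<lambda>u1 u2. lin2 W (\<lambda>w1 w2. F x1 x2 y1 y2 u1 u2 w1 w2)))
      = lin2 G (\<lambda>u1 u2. lin2 Y (\<lambda>y1 y2. lin2 W (\<lambda>w1 w2. F x1 x2 y1 y2 u1 u2 w1 w2)))"
      by (rule lin2_swap)
    also have "\<dots> = lin2 G (\<lambda>u1 u2. lin2 W (\<lambda>w1 w2. lin2 Y (\<lambda>y1 y2. F x1 x2 y1 y2 u1 u2 w1 w2)))"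
      by (intro arg_cong[where f = "lin2 G"] ext) (rule lin2_swap)
    finally show ?thesis .
  qed
  have "lin2 X (\<lambda>x1 x2. lin2 Y (\<lambda>y1 y2. lin2 G (\<lambda>u1 u2. lin2 W (\<lambda>w1 w2. F x1 x2 y1 y2 u1 u2 w1 w2))))
      = lin2 X (\<lambda>x1 x2. lin2 G (\<lambda>u1 u2. lin2 W (\<lambda>w1 w2. lin2 Y (\<lambda>y1 y2. F x1 x2 y1 y2 u1 u2 w1 w2))))"
    by (simp only: s1)
  also have "\<dots> = lin2 G (\<lambda>u1 u2. lin2 X (\<lambda>x1 x2. lin2 W (\<lambda>w1 w2. lin2 Y (\<lambda>y1 y2. F x1 x2 y1 y2 u1 u2 w1 w2))))"
    by (rule lin2_swap)
  also have "\<dots> = lin2 G (\<lambda>u1 u2. lin2 W (\<lambda>w1 w2. lin2 X (\<lambda>x1 x2. lin2 Y (\<lambda>y1 y2. F x1 x2 y1 y2 u1 u2 w1 w2))))"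
    by (intro arg_cong[where f = "lin2 G"] ext) (rule lin2_swap)
  finally show ?thesis .
qed

context prim begin

lemma Pq_eq: "Pq w z = wt q w * Lam z (cnt GX w) (cnt GT w) (cnt GY w)"
  by (auto simp: Pq_def Lam_invalid)

lemma Pq_K: "Pq u (GK # z) = q ^ (cnt GX u + cnt GT u) * Pq u z"
proof -
  have "Lam (GK # z) i j k = q ^ (i + j) * Lam z i j k" for i j k
    by (cases "i < n \<and> k < n") (auto simp: Lam_Cons Cop_K Lam_invalid)
  then show ?thesis by (simp add: Pq_eq mult_ac)
qed

lemma fin_coprodA_gen: "finite (supp2 (coprodA_gen q n g))"
  by (cases g) (auto intro!: finite_subset[OF supp2_add] finite_supp2_tens finite_supp2_tens_sum)

lemma lin2_coprodA_Cons:
  "lin2 (coprodA q n (g # x)) G = lin2 (coprodA_gen q n g) (\<lambda>u1 u2. lin2 (coprodA q n x) (\<lambda>v1 v2. G (u1 @ v1) (u2 @ v2)))"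
  unfolding coprodA_def by (rule lin2_coprodW_Cons[OF fin_coprodA_gen])

lemma lin2_coprodA_Nil: "lin2 (coprodA q n []) G = G [] []"
  unfolding coprodA_def by (rule lin2_coprodW_Nil)

lemma fin_coprodA: "finite (supp2 (coprodA q n x))"
  unfolding coprodA_def by (rule finite_supp2_coprodW[OF fin_coprodA_gen])

definition cT :: "nat \<Rightarrow> complex" where
  "cT a = q * (q - 1) powi (int a - 1) * (1 - inverse q ^ (a + 1))"

lemma lin2_dA_X: "lin2 (coprodA_gen q n GX) G = G [GX] [] + (\<Sum>a<n - 1. (q - 1) ^ a * G (GT # replicate a GY) (replicate (a + 1) GX))"
proof -
  have "lin2 (coprodA_gen q n GX) G = lin2 (tens (fa_word [GX]) (fa_word [])) G
     + lin2 (\<lambda>u v. \<Sum>a\<in>{0..<n-1}. (q - 1) ^ a * tens (fa_word (GT # replicate a GY)) (fa_word (replicate (a + 1) GX)) u v) G"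
    by (simp add: lin2_add finite_supp2_tens finite_supp2_tens_sum)
  then show ?thesis by (simp add: lin2_tens lin2_tens_sum atLeast0LessThan)
qed

lemma lin2_dA_T: "lin2 (coprodA_gen q n GT) G = (\<Sum>a<n - 1. cT a * G (GT # replicate a GY) (replicate a GX @ [GT]))"
  by (simp add: lin2_tens_sum atLeast0LessThan cT_def)

lemma lin2_dA_Y: "lin2 (coprodA_gen q n GY) G = G [] [GY] + (\<Sum>a<n - 1. (1 - inverse q) ^ a * G (replicate (a + 1) GY) (replicate a GX @ [GT]))"
proof -
  have "lin2 (coprodA_gen q n GY) G = lin2 (tens (fa_word []) (fa_word [GY])) G
     + lin2 (\<lambda>u v. \<Sum>a\<in>{0..<n-1}. (1 - inverse q) ^ a * tens (fa_word (replicate (a + 1) GY)) (fa_word (replicate a GX @ [GT])) u v) G"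
    by (simp add: lin2_add finite_supp2_tens finite_supp2_tens_sum)
  then show ?thesis by (simp add: lin2_tens lin2_tens_sum atLeast0LessThan)
qed

definition cTf :: "nat \<Rightarrow> complex" where
  "cTf a = (q - 1) ^ a * (q ^ (a + 1) - 1) / ((q - 1) * q ^ a)"

lemma qm1: "q - 1 \<noteq> 0" using q1 by simp

lemma cT_cTf: "cT a = cTf a"
proof (cases a)
  case 0
  have "cT 0 = q * inverse (q - 1) * (1 - inverse q)" by (simp add: cT_def power_int_minus)
  also have "\<dots> = 1" using q0 qm1 by (simp add: field_simps)
  finally show ?thesis using 0 qm1 by (simp add: cTf_def)
next
  case (Suc a')
  have "cT a = q * (q - 1) ^ a' * (1 - inverse q ^ (a + 1))"
    using Suc by (simp add: cT_def)
  also have "\<dots> = cTf a" using Suc q0 qm1 by (simp add: cTf_def field_simps power_inverse)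
  finally show ?thesis .
qed

lemma cT0: "cT 0 = 1" using qm1 by (simp add: cT_cTf cTf_def)

lemma cT_last: "cT (n - 1) = 0"
proof -
  have "q ^ (n - 1 + 1) = 1" using n1 qn by simp
  then show ?thesis by (simp add: cT_cTf cTf_def)
qed

lemma cT_Y: "(1 - inverse q) ^ a * qint q (a + 1) = cT a"
  unfolding cT_cTf cTf_def qint_def using q0 qm1
  by (simp add: field_simps power_mult_distrib)

lemma geo1: "(\<Sum>b\<le>s. q ^ b) * (q - 1) = q ^ (s + 1) - 1"
  by (induction s) (auto simp: algebra_simps)

lemma geo2: "(\<Sum>b\<le>s. q ^ b * q ^ b) * (q * q - 1) = q ^ (s + 1) * q ^ (s + 1) - 1"
  by (induction s) (auto simp: algebra_simps)

lemma cT_sum: "(q - inverse q) * (\<Sum>b\<le>s. (q - 1) ^ b * q ^ b * cT (s - b)) = cT (s + 1) * qint q (s + 1)"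
proof -
  let ?K = "(q - 1) ^ s / ((q - 1) * q ^ s)"
  have tm: "(q - 1) ^ b * q ^ b * cT (s - b) = ?K * (q ^ (s + 1) * q ^ b - q ^ b * q ^ b)" if "b \<le> s" for b
  proof -
    define d where "d = s - b"
    have d: "s = b + d" using that by (simp add: d_def)
    show ?thesis unfolding cT_cTf cTf_def d using q0 qm1
      by (simp add: field_simps power_add)
  qed
  have "(\<Sum>b\<le>s. (q - 1) ^ b * q ^ b * cT (s - b)) = ?K * (q ^ (s + 1) * (\<Sum>b\<le>s. q ^ b) - (\<Sum>b\<le>s. q ^ b * q ^ b))"
    by (simp add: tm sum_distrib_left sum_subtractf right_diff_distrib)
  moreover have "(q - inverse q) * (?K * (q ^ (s + 1) * (\<Sum>b\<le>s. q ^ b) - (\<Sum>b\<le>s. q ^ b * q ^ b)))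
      = cT (s + 1) * qint q (s + 1)"
  proof -
    let ?S1 = "\<Sum>b\<le>s. q ^ b" and ?S2 = "\<Sum>b\<le>s. q ^ b * q ^ b"
    have g1: "?S1 * (q - 1) = q ^ (s + 1) - 1" by (rule geo1)
    have g2: "?S2 * (q * q - 1) = q ^ (s + 1) * q ^ (s + 1) - 1" by (rule geo2)
    have key: "(q * q - 1) * (q ^ (s + 1) * ?S1 - ?S2) = (q ^ (s + 2) - 1) * (q ^ (s + 1) - 1)"
    proof -
      have "(q * q - 1) * (q ^ (s + 1) * ?S1 - ?S2) = (q + 1) * q ^ (s + 1) * (?S1 * (q - 1)) - ?S2 * (q * q - 1)"
        by (simp add: algebra_simps)
      also have "\<dots> = (q + 1) * q ^ (s + 1) * (q ^ (s + 1) - 1) - (q ^ (s + 1) * q ^ (s + 1) - 1)"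
        by (simp only: g1 g2)
      also have "\<dots> = (q ^ (s + 2) - 1) * (q ^ (s + 1) - 1)"
        by (simp add: algebra_simps)
      finally show ?thesis .
    qed
    have "(q - inverse q) * (?K * (q ^ (s + 1) * ?S1 - ?S2))
        = (q - 1) ^ s / ((q - 1) * q ^ (s + 1)) * ((q * q - 1) * (q ^ (s + 1) * ?S1 - ?S2))"
      using q0 qm1 by (simp add: field_simps)
    also have "\<dots> = (q - 1) ^ s / ((q - 1) * q ^ (s + 1)) * ((q ^ (s + 2) - 1) * (q ^ (s + 1) - 1))"
      by (simp only: key)
    also have "\<dots> = cT (s + 1) * qint q (s + 1)"
    proof -
      have h1: "(1 - q ^ (s + 1)) / (1 - q) = (q ^ (s + 1) - 1) / (q - 1)"
        by (metis minus_diff_eq minus_divide_divide)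
      have aux: "A / (x * Q) * (B * C) = A * x * B / (x * Q) * (C / x)"
        if "x \<noteq> 0" "Q \<noteq> 0" for A B C Q x :: complex
        using that by (simp add: field_simps)
      have "cT (s + 1) * qint q (s + 1) = (q - 1) ^ s * (q - 1) * (q ^ (s + 2) - 1) / ((q - 1) * q ^ (s + 1)) * ((q ^ (s + 1) - 1) / (q - 1))"
        unfolding cT_cTf cTf_def qint_def h1 by (simp add: algebra_simps)
      then show ?thesis using aux[OF qm1, of "q ^ (s + 1)" "(q - 1) ^ s" "q ^ (s + 2) - 1" "q ^ (s + 1) - 1"] q0 by simp
    qed
    finally show ?thesis .
  qed
  ultimately show ?thesis by simp
qed

end

declare coprodA_gen.simps[simp del] coprodU_gen.simps[simp del]

lemma wt_repY0[simp]: "wt q (replicate a GY) = 1"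
  using wt_repY[of q a "[]"] by simp
lemma wt_repX0[simp]: "wt q (replicate a GX) = 1"
  using wt_repX[of q a "[]"] by simp
declare wt_repX[simp] wt_repY[simp]

lemma dsum_tri:
  fixes f :: "nat \<Rightarrow> nat \<Rightarrow> complex"
  assumes "M \<le> N"
  shows "(\<Sum>a<N. \<Sum>b<N. if a + b < M then f a b else 0) = (\<Sum>s<M. \<Sum>a\<le>s. f a (s - a))"
proof -
  have "(\<Sum>a<N. \<Sum>b<N. if a + b < M then f a b else 0) = (\<Sum>(a,b)\<in>{..<N} \<times> {..<N}. if a + b < M then f a b else 0)"
    by (rule sum.cartesian_product)
  also have "\<dots> = (\<Sum>(a,b)\<in>{(a,b). a + b < M}. f a b)"
  proof (rule sum.mono_neutral_cong_right)
    show "{(a, b). a + b < M} \<subseteq> {..<N} \<times> {..<N}" using assms by auto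
  qed (auto split: if_splits)
  also have "\<dots> = (\<Sum>s<M. \<Sum>a\<le>s. f a (s - a))"
    by (rule sum.triangle_reindex)
  finally show ?thesis .
qed

lemma sum_shift0:
  fixes g :: "nat \<Rightarrow> complex"
  assumes "g 0 = 0"
  shows "(\<Sum>a<Suc m. g a) = (\<Sum>s<m. g (Suc s))"
  using sum.lessThan_Suc_shift[of g m] assms by simp

lemma sum_if0: "(\<Sum>a<(m::nat). (c a :: complex) * ((if a = 0 then 1 else 0) * f a)) = (if 0 < m then c 0 * f 0 else 0)"
proof -
  have "(\<Sum>a<m. c a * ((if a = 0 then 1 else 0) * f a)) = (\<Sum>a<m. if a = 0 then c a * f a else 0)"
    by (rule sum.cong) auto
  also have "\<dots> = (if 0 \<in> {..<m} then c 0 * f 0 else 0)"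
    by (rule sum.delta) simp
  finally show ?thesis by simp
qed

context prim begin

definition H4 :: "genA list \<Rightarrow> genU list \<Rightarrow> genU list \<Rightarrow> bool" where
  "H4 a x y \<longleftrightarrow> Pq a (x @ y) = lin2 (coprodA q n a) (\<lambda>u1 u2. Pq u1 x * Pq u2 y)"

lemma lin2_coprodA_single: "lin2 (coprodA q n [g]) G = lin2 (coprodA_gen q n g) G"
  by (simp add: lin2_coprodA_Cons lin2_coprodA_Nil)

lemma lin2_coprodA_two: "lin2 (coprodA q n [g, h]) G = lin2 (coprodA_gen q n g) (\<lambda>u1 u2. lin2 (coprodA_gen q n h) (\<lambda>v1 v2. G (u1 @ v1) (u2 @ v2)))"
  by (simp add: lin2_coprodA_Cons lin2_coprodA_Nil)

lemma Lam_F0: "Lam (GF # z) 0 j k = 0"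
  by (simp add: Lam_Cons Cop_F)

lemma cE2_01: "cE2 0 1 = q - inverse q"
  using n1 by (simp add: cE2_def)

lemma n2_q: "\<not> 2 < n \<Longrightarrow> q = -1"
proof -
  assume "\<not> 2 < n"
  then have "n = 2" using n1 by auto
  then have "q * q = 1" using qn by (simp add: power2_eq_square)
  then have "(q - 1) * (q + 1) = 0" by (simp add: algebra_simps)
  then have "q + 1 = 0" using qm1 by simp
  then show "q = -1" by (simp add: eq_neg_iff_add_eq_0)
qed

lemma gen_nil: "H4 [g] [] y"
  using n1 cT0 by (cases g) (simp_all add: H4_def lin2_coprodA_single lin2_dA_X lin2_dA_T lin2_dA_Y Pq_eq Lam_Nil e0_def sum_if0)

lemma gen_K: "H4 [g] x y \<Longrightarrow> H4 [g] (GK # x) y"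
  by (cases g) (simp_all add: H4_def lin2_coprodA_single lin2_dA_X lin2_dA_T lin2_dA_Y Pq_K
      sum_distrib_left distrib_left mult_ac)

lemma gen_F:
  assumes IH: "\<And>a y. H4 a x y"
  shows "H4 [g] (GF # x) y"
proof (cases g)
  case GX
  have "Pq [GX] (GF # (x @ y)) = Pq [] (x @ y)"
    using n1 qint_1[OF qi1] by (simp add: Pq_eq Lam_Cons Cop_F)
  also have "\<dots> = Pq [] x * Pq [] y" using IH[of "[]" y] by (simp add: H4_def lin2_coprodA_Nil)
  finally show ?thesis using GX n1 qint_1[OF qi1]
    by (simp add: H4_def lin2_coprodA_single lin2_dA_X Pq_eq Lam_F0 Lam_Cons Cop_F)
next
  case GT
  show ?thesis using GT by (simp add: H4_def lin2_coprodA_single lin2_dA_T Pq_eq Lam_F0)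
next
  case GY
  show ?thesis using GY by (simp add: H4_def lin2_coprodA_single lin2_dA_Y Pq_eq Lam_F0)
qed

lemma gen_EY:
  assumes IH: "\<And>a y. H4 a x y"
  shows "H4 [GY] (GE # x) y"
proof -
  have "Pq [GY] (GE # (x @ y)) = Pq [GT] (x @ y)"
    using n1 qint_1[OF q1] by (simp add: Pq_eq Lam_Cons Cop_E_val cE1_def cE2_def)
  also have "\<dots> = (\<Sum>a<n - 1. cT a * (Lam x 0 1 a * Lam y a 1 0))"
    using IH[of "[GT]" y] by (simp add: H4_def lin2_coprodA_single lin2_dA_T Pq_eq)
  also have "\<dots> = lin2 (coprodA q n [GY]) (\<lambda>u1 u2. Pq u1 (GE # x) * Pq u2 y)"
  proof -
    have t0: "Lam (GE # x) 0 0 0 = 0" using n1 by (simp add: Lam_Cons Cop_E_val cE1_def cE2_def)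
    have ta: "Lam (GE # x) 0 0 (Suc a) = qint q (Suc a) * Lam x 0 1 a" if "a < n - 1" for a
      using that n1 by (simp add: Lam_Cons Cop_E_val cE1_def cE2_def)
    have "lin2 (coprodA q n [GY]) (\<lambda>u1 u2. Pq u1 (GE # x) * Pq u2 y)
        = (\<Sum>a<n - 1. (1 - inverse q) ^ a * (Lam (GE # x) 0 0 (Suc a) * Lam y a 1 0))"
      by (simp add: lin2_coprodA_single lin2_dA_Y Pq_eq t0)
    also have "\<dots> = (\<Sum>a<n - 1. cT a * (Lam x 0 1 a * Lam y a 1 0))"
    proof (rule sum.cong[OF refl])
      fix a assume "a \<in> {..<n - 1}"
      then show "(1 - inverse q) ^ a * (Lam (GE # x) 0 0 (Suc a) * Lam y a 1 0) = cT a * (Lam x 0 1 a * Lam y a 1 0)"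
        using ta[of a] cT_Y[of a] by (simp add: mult_ac)
    qed
    finally show ?thesis by simp
  qed
  finally show ?thesis by (simp add: H4_def)
qed

end

context prim begin

lemma geo_qint: "(\<Sum>b\<le>s. q ^ b) = qint q (s + 1)"
proof -
  have "(\<Sum>b\<le>s. q ^ b) * (q - 1) = q ^ (s + 1) - 1" by (rule geo1)
  then show ?thesis unfolding qint_def using qm1
    by (simp add: field_simps)
qed

lemma cE1_0: "cE1 0 = 0" by (simp add: cE1_def)

lemma gen_EX:
  assumes IH: "\<And>a y. H4 a x y"
  shows "H4 [GX] (GE # x) y"
proof -
  define e where "e a = (q - 1) ^ a" for a :: nat
  define B where "B a = Lam x 1 1 a * Lam y (Suc a) 0 0" for a
  define D where "D s = Lam x 0 2 s * Lam y (Suc (Suc s)) 0 0" for s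
  define A0 where "A0 = Lam x 2 0 0 * Lam y 0 0 0"
  have E1: "lin2 (coprodA q n [GX, GX]) (\<lambda>u1 u2. Pq u1 x * Pq u2 y)
      = A0 + (\<Sum>b<n - 1. e b * B b) + (\<Sum>a<n - 1. e a * (inverse q * B a + (\<Sum>b<n - 1. e b * (q ^ a * D (a + b)))))"
    unfolding lin2_coprodA_two lin2_dA_X
    by (simp add: Pq_eq e_def B_def D_def A0_def mult_ac numeral_2_eq_2)
  have LHS: "Pq [GX] (GE # (x @ y)) = cE2 1 0 * Lam (x @ y) 2 0 0"
    using n1 by (simp add: Pq_eq Lam_Cons Cop_E_val cE1_0 numeral_2_eq_2)
  have L2: "Lam (x @ y) 2 0 0 = lin2 (coprodA q n [GX, GX]) (\<lambda>u1 u2. Pq u1 x * Pq u2 y)"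
    using IH[of "[GX, GX]" y] by (simp add: H4_def Pq_eq numeral_2_eq_2)
  have R1: "Lam (GE # x) 1 0 0 = cE2 1 0 * Lam x 2 0 0"
    using n1 by (simp add: Lam_Cons Cop_E_val cE1_0 numeral_2_eq_2)
  have R2: "Lam (GE # x) 0 1 a = cE1 a * Lam x 0 2 (a - 1) + cE2 0 1 * Lam x 1 1 a" if "a < n - 1" for a
    using that n1 by (simp add: Lam_Cons Cop_E_val numeral_2_eq_2)
  have RHS: "lin2 (coprodA q n [GX]) (\<lambda>u1 u2. Pq u1 (GE # x) * Pq u2 y)
     = cE2 1 0 * A0 + (\<Sum>a<n - 1. e a * (cE1 a * Lam x 0 2 (a - 1) * Lam y (Suc a) 0 0)) + cE2 0 1 * (\<Sum>a<n - 1. e a * B a)"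
  proof -
    have "lin2 (coprodA q n [GX]) (\<lambda>u1 u2. Pq u1 (GE # x) * Pq u2 y)
       = Lam (GE # x) 1 0 0 * Lam y 0 0 0 + (\<Sum>a<n - 1. e a * (Lam (GE # x) 0 1 a * Lam y (Suc a) 0 0))"
      unfolding lin2_coprodA_single lin2_dA_X by (simp add: Pq_eq e_def)
    also have "(\<Sum>a<n - 1. e a * (Lam (GE # x) 0 1 a * Lam y (Suc a) 0 0))
        = (\<Sum>a<n - 1. e a * (cE1 a * Lam x 0 2 (a - 1) * Lam y (Suc a) 0 0) + cE2 0 1 * (e a * B a))"
    proof (rule sum.cong[OF refl])
      fix a assume "a \<in> {..<n - 1}"
      then have "Lam (GE # x) 0 1 a = cE1 a * Lam x 0 2 (a - 1) + cE2 0 1 * Lam x 1 1 a" by (intro R2) auto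
      then show "e a * (Lam (GE # x) 0 1 a * Lam y (Suc a) 0 0)
          = e a * (cE1 a * Lam x 0 2 (a - 1) * Lam y (Suc a) 0 0) + cE2 0 1 * (e a * B a)"
        by (simp add: B_def algebra_simps)
    qed
    finally show ?thesis using R1 by (simp add: sum.distrib sum_distrib_left A0_def mult_ac)
  qed
  have F1: "cE2 1 0 * (1 + inverse q) = cE2 0 1"
  proof (cases "2 < n")
    case True then show ?thesis using n1 q0 by (simp add: cE2_def field_simps)
  next
    case False then have "q = -1" by (rule n2_q)
    then have "q - inverse q = 0" by simp
    then have "cE2 0 1 = 0" using cE2_01 by simp
    moreover have "cE2 1 0 = 0" using False by (simp add: cE2_def)
    ultimately show ?thesis by simp
  qed
  have F2: "cE2 1 0 * (\<Sum>a<n - 1. \<Sum>b<n - 1. e a * e b * q ^ a * D (a + b))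
      = (\<Sum>a<n - 1. e a * (cE1 a * Lam x 0 2 (a - 1) * Lam y (Suc a) 0 0))"
  proof (cases "2 < n")
    case False
    then have "n - 1 = Suc 0" using n1 by auto
    then show ?thesis using False by (simp add: cE2_def cE1_0)
  next
    case True
    have "(\<Sum>a<n - 1. \<Sum>b<n - 1. e a * e b * q ^ a * D (a + b))
        = (\<Sum>a<n - 1. \<Sum>b<n - 1. if a + b < n - 2 then e a * e b * q ^ a * D (a + b) else 0)"
      by (intro sum.cong refl) (auto simp: D_def Lam_invalid)
    also have "\<dots> = (\<Sum>s<n - 2. \<Sum>a\<le>s. e a * e (s - a) * q ^ a * D (a + (s - a)))"
      by (rule dsum_tri) simp
    also have "\<dots> = (\<Sum>s<n - 2. (q - 1) ^ s * qint q (s + 1) * D s)"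
    proof (rule sum.cong[OF refl])
      fix s
      have "(\<Sum>a\<le>s. e a * e (s - a) * q ^ a * D (a + (s - a))) = (\<Sum>a\<le>s. (q - 1) ^ s * D s * q ^ a)"
        by (rule sum.cong[OF refl]) (auto simp: e_def power_add[symmetric] mult_ac)
      also have "\<dots> = (q - 1) ^ s * D s * (\<Sum>a\<le>s. q ^ a)" by (simp add: sum_distrib_left)
      finally show "(\<Sum>a\<le>s. e a * e (s - a) * q ^ a * D (a + (s - a))) = (q - 1) ^ s * qint q (s + 1) * D s"
        by (simp add: geo_qint mult_ac)
    qed
    finally have l: "cE2 1 0 * (\<Sum>a<n - 1. \<Sum>b<n - 1. e a * e b * q ^ a * D (a + b))
       = (\<Sum>s<n - 2. (q - 1) ^ (s + 1) * qint q (s + 1) * D s)"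
      using True by (simp add: cE2_def sum_distrib_left mult_ac)
    have nn: "n - 1 = Suc (n - 2)" using True by auto
    have "(\<Sum>a<n - 1. e a * (cE1 a * Lam x 0 2 (a - 1) * Lam y (Suc a) 0 0))
        = (\<Sum>s<n - 2. e (Suc s) * (cE1 (Suc s) * Lam x 0 2 s * Lam y (Suc (Suc s)) 0 0))"
      unfolding nn using sum_shift0[of "\<lambda>a. e a * (cE1 a * Lam x 0 2 (a - 1) * Lam y (Suc a) 0 0)" "n - 2"]
      by (simp add: cE1_0)
    also have "\<dots> = (\<Sum>s<n - 2. (q - 1) ^ (s + 1) * qint q (s + 1) * D s)"
      by (rule sum.cong[OF refl]) (simp add: e_def cE1_def D_def mult_ac)
    finally show ?thesis using l by simp
  qed
  have inner: "(\<Sum>a<n - 1. e a * (inverse q * B a + (\<Sum>b<n - 1. e b * (q ^ a * D (a + b)))))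
      = inverse q * (\<Sum>a<n - 1. e a * B a) + (\<Sum>a<n - 1. \<Sum>b<n - 1. e a * e b * q ^ a * D (a + b))"
    by (simp add: sum.distrib sum_distrib_left distrib_left mult_ac)
  have "Pq [GX] (GE # (x @ y)) = cE2 1 0 * A0 + cE2 1 0 * (1 + inverse q) * (\<Sum>b<n - 1. e b * B b)
      + cE2 1 0 * (\<Sum>a<n - 1. \<Sum>b<n - 1. e a * e b * q ^ a * D (a + b))"
    unfolding LHS L2 E1 inner by (simp add: algebra_simps)
  also have "\<dots> = lin2 (coprodA q n [GX]) (\<lambda>u1 u2. Pq u1 (GE # x) * Pq u2 y)"
    unfolding F1 F2 RHS by (simp add: algebra_simps)
  finally show ?thesis by (simp add: H4_def)
qed

end

context prim begin

lemma gen_ET: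
  assumes IH: "\<And>a y. H4 a x y"
  shows "H4 [GT] (GE # x) y"
proof -
  define e where "e a = (q - 1) ^ a" for a :: nat
  define C where "C a = Lam x 1 1 a * Lam y a 1 0" for a
  define D where "D s = Lam x 0 2 s * Lam y (Suc s) 1 0" for s
  have E1: "lin2 (coprodA q n [GX, GT]) (\<lambda>u1 u2. Pq u1 x * Pq u2 y)
      = (\<Sum>a<n - 1. cT a * C a) + (\<Sum>b<n - 1. e b * (\<Sum>a<n - 1. cT a * (q ^ b * D (b + a))))"
    unfolding lin2_coprodA_two lin2_dA_X lin2_dA_T
    by (simp add: Pq_eq e_def C_def D_def mult_ac numeral_2_eq_2)
  have LHS: "Pq [GT] (GE # (x @ y)) = cE2 0 1 * Lam (x @ y) 1 1 0"
    using n1 by (simp add: Pq_eq Lam_Cons Cop_E_val cE1_0)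
  have L2: "Lam (x @ y) 1 1 0 = lin2 (coprodA q n [GX, GT]) (\<lambda>u1 u2. Pq u1 x * Pq u2 y)"
    using IH[of "[GX, GT]" y] by (simp add: H4_def Pq_eq)
  have R2: "Lam (GE # x) 0 1 a = cE1 a * Lam x 0 2 (a - 1) + cE2 0 1 * Lam x 1 1 a" if "a < n - 1" for a
    using that n1 by (simp add: Lam_Cons Cop_E_val numeral_2_eq_2)
  have RHS: "lin2 (coprodA q n [GT]) (\<lambda>u1 u2. Pq u1 (GE # x) * Pq u2 y)
     = (\<Sum>a<n - 1. cT a * (cE1 a * Lam x 0 2 (a - 1) * Lam y a 1 0)) + cE2 0 1 * (\<Sum>a<n - 1. cT a * C a)"
  proof -
    have "lin2 (coprodA q n [GT]) (\<lambda>u1 u2. Pq u1 (GE # x) * Pq u2 y)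
       = (\<Sum>a<n - 1. cT a * (Lam (GE # x) 0 1 a * Lam y a 1 0))"
      unfolding lin2_coprodA_single lin2_dA_T by (simp add: Pq_eq)
    also have "\<dots> = (\<Sum>a<n - 1. cT a * (cE1 a * Lam x 0 2 (a - 1) * Lam y a 1 0) + cE2 0 1 * (cT a * C a))"
    proof (rule sum.cong[OF refl])
      fix a assume "a \<in> {..<n - 1}"
      then have "Lam (GE # x) 0 1 a = cE1 a * Lam x 0 2 (a - 1) + cE2 0 1 * Lam x 1 1 a" by (intro R2) auto
      then show "cT a * (Lam (GE # x) 0 1 a * Lam y a 1 0)
          = cT a * (cE1 a * Lam x 0 2 (a - 1) * Lam y a 1 0) + cE2 0 1 * (cT a * C a)"
        by (simp add: C_def algebra_simps)
    qed
    finally show ?thesis by (simp add: sum.distrib sum_distrib_left)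
  qed
  have F3: "cE2 0 1 * (\<Sum>b<n - 1. e b * (\<Sum>a<n - 1. cT a * (q ^ b * D (b + a))))
      = (\<Sum>a<n - 1. cT a * (cE1 a * Lam x 0 2 (a - 1) * Lam y a 1 0))"
  proof -
    have "(\<Sum>b<n - 1. e b * (\<Sum>a<n - 1. cT a * (q ^ b * D (b + a))))
        = (\<Sum>b<n - 1. \<Sum>a<n - 1. if b + a < n - 1 then e b * q ^ b * cT a * D (b + a) else 0)"
      by (intro sum.cong refl) (auto simp: D_def Lam_invalid sum_distrib_left mult_ac intro!: sum.cong)
    also have "\<dots> = (\<Sum>s<n - 1. \<Sum>b\<le>s. e b * q ^ b * cT (s - b) * D (b + (s - b)))"
      by (rule dsum_tri) simp
    also have "\<dots> = (\<Sum>s<n - 1. (\<Sum>b\<le>s. (q - 1) ^ b * q ^ b * cT (s - b)) * D s)"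
      by (rule sum.cong[OF refl]) (auto simp: e_def sum_distrib_right intro!: sum.cong)
    finally have X: "(\<Sum>b<n - 1. e b * (\<Sum>a<n - 1. cT a * (q ^ b * D (b + a))))
        = (\<Sum>s<n - 1. (\<Sum>b\<le>s. (q - 1) ^ b * q ^ b * cT (s - b)) * D s)" .
    have "cE2 0 1 * (\<Sum>b<n - 1. e b * (\<Sum>a<n - 1. cT a * (q ^ b * D (b + a))))
        = (q - inverse q) * (\<Sum>s<n - 1. (\<Sum>b\<le>s. (q - 1) ^ b * q ^ b * cT (s - b)) * D s)"
      by (simp only: X cE2_01)
    also have "\<dots> = (\<Sum>s<n - 1. (q - inverse q) * ((\<Sum>b\<le>s. (q - 1) ^ b * q ^ b * cT (s - b)) * D s))"
      by (rule sum_distrib_left)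
    also have "\<dots> = (\<Sum>s<n - 1. ((q - inverse q) * (\<Sum>b\<le>s. (q - 1) ^ b * q ^ b * cT (s - b))) * D s)"
      by (simp only: mult.assoc)
    also have "\<dots> = (\<Sum>s<n - 1. cT (s + 1) * qint q (s + 1) * D s)"
      by (simp only: cT_sum)
    also have "\<dots> = (\<Sum>s<n - 2. cT (s + 1) * qint q (s + 1) * D s)"
    proof -
      have nn: "n - 1 = Suc (n - 2)" using n1 by auto
      have "cT (n - 2 + 1) = 0" using cT_last nn by simp
      then show ?thesis unfolding nn by simp
    qed
    also have "\<dots> = (\<Sum>a<n - 1. cT a * (cE1 a * Lam x 0 2 (a - 1) * Lam y a 1 0))"
    proof -
      have nn: "n - 1 = Suc (n - 2)" using n1 by auto
      have "(\<Sum>a<n - 1. cT a * (cE1 a * Lam x 0 2 (a - 1) * Lam y a 1 0))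
          = (\<Sum>s<n - 2. cT (Suc s) * (cE1 (Suc s) * Lam x 0 2 (Suc s - 1) * Lam y (Suc s) 1 0))"
        unfolding nn using sum_shift0[of "\<lambda>a. cT a * (cE1 a * Lam x 0 2 (a - 1) * Lam y a 1 0)" "n - 2"]
        by (simp add: cE1_0)
      also have "\<dots> = (\<Sum>s<n - 2. cT (s + 1) * qint q (s + 1) * D s)"
        by (rule sum.cong[OF refl]) (simp add: cE1_def D_def mult_ac)
      finally show ?thesis by simp
    qed
    finally show ?thesis .
  qed
  have "Pq [GT] (GE # (x @ y)) = cE2 0 1 * (\<Sum>a<n - 1. cT a * C a)
      + cE2 0 1 * (\<Sum>b<n - 1. e b * (\<Sum>a<n - 1. cT a * (q ^ b * D (b + a))))"
    unfolding LHS L2 E1 by (simp add: algebra_simps)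
  also have "\<dots> = lin2 (coprodA q n [GT]) (\<lambda>u1 u2. Pq u1 (GE # x) * Pq u2 y)"
    unfolding F3 RHS by (simp add: algebra_simps)
  finally show ?thesis by (simp add: H4_def)
qed

end

definition mu :: "genU list \<Rightarrow> nat" where "mu x = cnt GE x + cnt GF x"

lemma supp2_tens_single: "supp2 (tens (fa_word a) (fa_word b)) \<subseteq> {(a, b)}"
  by (auto simp: supp2_def tens_def fa_word_def split: if_splits)

lemma supp2_dU: "(u1, u2) \<in> supp2 (coprodU_gen n h) \<Longrightarrow> mu u1 \<le> mu [h] \<and> mu u2 \<le> mu [h]"
proof (cases h)
  case GF
  assume a: "(u1, u2) \<in> supp2 (coprodU_gen n h)"
  then have "(u1, u2) \<in> supp2 (tens (fa_word [GF]) (fa_word [])) \<union> supp2 (tens (fa_word (replicate (n - 1) GK)) (fa_word [GF]))"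
    using GF supp2_add[of "tens (fa_word [GF]) (fa_word [])" "tens (fa_word (replicate (n - 1) GK)) (fa_word [GF])"]
    by (auto simp: coprodU_gen.simps)
  then show ?thesis using GF supp2_tens_single by (fastforce simp: mu_def)
next
  case GK
  assume a: "(u1, u2) \<in> supp2 (coprodU_gen n h)"
  then show ?thesis using GK supp2_tens_single by (fastforce simp: mu_def coprodU_gen.simps)
next
  case GE
  assume a: "(u1, u2) \<in> supp2 (coprodU_gen n h)"
  then have "(u1, u2) \<in> supp2 (tens (fa_word [GE]) (fa_word [GK])) \<union> supp2 (tens (fa_word []) (fa_word [GE]))"
    using GE supp2_add[of "tens (fa_word [GE]) (fa_word [GK])" "tens (fa_word []) (fa_word [GE])"]
    by (auto simp: coprodU_gen.simps)
  then show ?thesis using GE supp2_tens_single by (fastforce simp: mu_def)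
qed

lemma supp2_coprodU_mu: "(x1, x2) \<in> supp2 (coprodU n x) \<Longrightarrow> mu x1 \<le> mu x \<and> mu x2 \<le> mu x"
proof (induction x arbitrary: x1 x2)
  case Nil
  then have "(x1, x2) \<in> supp2 (tens (fa_word []) (fa_word []))" by (simp add: coprodU_def fa2_one_def)
  then show ?case using supp2_tens_single by (fastforce simp: mu_def)
next
  case (Cons h x)
  then have "(x1, x2) \<in> catp ` (supp2 (coprodU_gen n h) \<times> supp2 (coprodU n x))"
    using supp2_fa2_mult by (fastforce simp: coprodU_def)
  then obtain u1 u2 v1 v2 where "(u1, u2) \<in> supp2 (coprodU_gen n h)" "(v1, v2) \<in> supp2 (coprodU n x)"
    "x1 = u1 @ v1" "x2 = u2 @ v2"
    by (auto simp: catp_def)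
  then show ?case using supp2_dU Cons.IH by (fastforce simp: mu_def)
qed

context prim begin

lemma pair2R_lin2: "pair2R Pq a b D = lin2 D (\<lambda>v1 v2. Pq a v1 * Pq b v2)"
  unfolding pair2R_def lin2_def by (simp add: split_def mult.assoc)

lemma pair2L_lin2: "pair2L Pq D x y = lin2 D (\<lambda>u1 u2. Pq u1 x * Pq u2 y)"
  unfolding pair2L_def lin2_def by (simp add: split_def mult.assoc)

lemma H3': "Pq (a @ b) x = lin2 (coprodU n x) (\<lambda>v1 v2. Pq a v1 * Pq b v2)"
  using H3_words pair2R_lin2 by simp

lemma gen_all0:
  assumes IHN: "\<And>x' a y. mu x' < N \<Longrightarrow> H4 a x' y"
  shows "\<forall>y. mu zs \<le> N \<longrightarrow> H4 [g] zs y"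
proof (induction zs)
  case Nil show ?case using gen_nil by simp
next
  case (Cons h zs)
  show ?case
  proof (intro allI impI)
    fix y assume m: "mu (h # zs) \<le> N"
    show "H4 [g] (h # zs) y"
    proof (cases h)
      case GK
      then have "mu zs \<le> N" using m by (simp add: mu_def)
      then show ?thesis using GK Cons.IH gen_K by blast
    next
      case GF
      then have "mu zs < N" using m by (simp add: mu_def)
      then have "\<And>a y. H4 a zs y" using IHN by blast
      then show ?thesis using GF gen_F by blast
    next
      case GE
      then have "mu zs < N" using m by (simp add: mu_def)
      then have IH: "\<And>a y. H4 a zs y" using IHN by blast
      show ?thesis using GE IH gen_EX gen_ET gen_EY by (cases g) auto
    qed
  qed
qed

lemma gen_all:
  assumes IHN: "\<And>x' a y. mu x' < N \<Longrightarrow> H4 a x' y" and m: "mu zs \<le> N"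
  shows "H4 [g] zs y"
  using gen_all0[OF IHN] m by blast

lemma counitU_append: "counitU (x @ y) = counitU x * counitU y"
  by (simp add: counitU_def counitW_def)

lemma words_all0:
  assumes IHN: "\<And>x' a y. mu x' < N \<Longrightarrow> H4 a x' y"
  shows "\<forall>x y. mu x \<le> N \<longrightarrow> H4 a x y"
proof (induction a)
  case Nil
  show ?case by (simp add: H4_def lin2_coprodA_Nil Pq_Nil_left counitU_append)
next
  case (Cons g w)
  show ?case
  proof (intro allI impI)
  fix x y assume mx: "mu x \<le> N"
  let ?X = "coprodU n x" and ?Y = "coprodU n y" and ?G = "coprodA_gen q n g" and ?W = "coprodA q n w"
  have "Pq (g # w) (x @ y) = lin2 ?X (\<lambda>x1 x2. lin2 ?Y (\<lambda>y1 y2. Pq [g] (x1 @ y1) * Pq w (x2 @ y2)))"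
    using H3'[of "[g]" w "x @ y"] by (simp add: lin2_coprodU_append)
  also have "\<dots> = lin2 ?X (\<lambda>x1 x2. lin2 ?Y (\<lambda>y1 y2.
      lin2 ?G (\<lambda>u1 u2. Pq u1 x1 * Pq u2 y1) * lin2 ?W (\<lambda>w1 w2. Pq w1 x2 * Pq w2 y2)))"
  proof (rule lin2_cong)
    fix x1 x2 assume "(x1, x2) \<in> supp2 ?X"
    then have "mu x1 \<le> mu x \<and> mu x2 \<le> mu x" by (rule supp2_coprodU_mu)
    then have m: "mu x1 \<le> N" "mu x2 \<le> N" using mx by auto
    have "Pq [g] (x1 @ y1) = lin2 ?G (\<lambda>u1 u2. Pq u1 x1 * Pq u2 y1)" for y1
      using gen_all[OF IHN m(1)] by (simp add: H4_def lin2_coprodA_single)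
    moreover have "Pq w (x2 @ y2) = lin2 ?W (\<lambda>w1 w2. Pq w1 x2 * Pq w2 y2)" for y2
      using Cons.IH m(2) by (simp add: H4_def)
    ultimately show "lin2 ?Y (\<lambda>y1 y2. Pq [g] (x1 @ y1) * Pq w (x2 @ y2)) = lin2 ?Y (\<lambda>y1 y2.
      lin2 ?G (\<lambda>u1 u2. Pq u1 x1 * Pq u2 y1) * lin2 ?W (\<lambda>w1 w2. Pq w1 x2 * Pq w2 y2))" by simp
  qed
  also have "\<dots> = lin2 ?X (\<lambda>x1 x2. lin2 ?Y (\<lambda>y1 y2. lin2 ?G (\<lambda>u1 u2. lin2 ?W (\<lambda>w1 w2.
      (Pq u1 x1 * Pq u2 y1) * (Pq w1 x2 * Pq w2 y2)))))"
    by (simp only: lin2_mult)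
  also have "\<dots> = lin2 ?G (\<lambda>u1 u2. lin2 ?W (\<lambda>w1 w2. lin2 ?X (\<lambda>x1 x2. lin2 ?Y (\<lambda>y1 y2.
      (Pq u1 x1 * Pq u2 y1) * (Pq w1 x2 * Pq w2 y2)))))"
    by (rule lin2_4swap)
  also have "\<dots> = lin2 ?G (\<lambda>u1 u2. lin2 ?W (\<lambda>w1 w2. lin2 ?X (\<lambda>x1 x2. lin2 ?Y (\<lambda>y1 y2.
      (Pq u1 x1 * Pq w1 x2) * (Pq u2 y1 * Pq w2 y2)))))"
    by (simp only: mult_ac)
  also have "\<dots> = lin2 ?G (\<lambda>u1 u2. lin2 ?W (\<lambda>w1 w2. Pq (u1 @ w1) x * Pq (u2 @ w2) y))"
    by (simp only: H3' lin2_mult)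
  also have "\<dots> = lin2 (coprodA q n (g # w)) (\<lambda>a1 a2. Pq a1 x * Pq a2 y)"
    by (simp only: lin2_coprodA_Cons)
  finally show "H4 (g # w) x y" by (simp add: H4_def)
  qed
qed

lemma words_all:
  assumes IHN: "\<And>x' a y. mu x' < N \<Longrightarrow> H4 a x' y" and m: "mu x \<le> N"
  shows "H4 a x y"
  using words_all0[OF IHN] m by blast

lemma H4_all: "H4 a x y"
proof -
  have "\<forall>x. mu x \<le> N \<longrightarrow> (\<forall>a y. H4 a x y)" for N
  proof (induction N rule: less_induct)
    case (less N)
    have IHN: "\<And>x' a y. mu x' < N \<Longrightarrow> H4 a x' y" using less by blast
    show ?case using words_all[OF IHN] by blast
  qed
  then show ?thesis by blast
qed

theorem main:
  "\<exists>P. hopf_pairing q n P \<and>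
     P [GX] [GF] = 1 \<and> P [GT] [GK] = q \<and> P [GY] [GE] = 1 \<and>
     (\<forall>i j k i' j' k'. i < n \<longrightarrow> j < n \<longrightarrow> k < n \<longrightarrow> i' < n \<longrightarrow> j' < n \<longrightarrow> k' < n \<longrightarrow>
        P (monoA i j k) (monoU i' j' k') =
          (if i = i' \<and> k = k' then q ^ (j * j') * qfact (inverse q) i * qfact q k else 0)) \<and>
     (\<forall>i j k i' j' k'. i < n \<longrightarrow> j < n \<longrightarrow> k < n \<longrightarrow> i' < n \<longrightarrow> j' < n \<longrightarrow> k' < n \<longrightarrow>
        pairL P (dual_elt q n i j k) (monoU i' j' k') =
          (if i = i' \<and> j = j' \<and> k = k' then 1 else 0))"
proof (intro exI[of _ Pq] conjI allI impI)
  show "hopf_pairing q n Pq"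
    unfolding hopf_pairing_def
    using relA_Pq relU_Pq H3_words H4_all Pq_Nil_left Pq_Nil_right
    by (simp add: H4_def pair2L_lin2)
qed (use Pq_gens Pq_mono dual_basis in auto)

end

theorem corollary4p3:
  fixes q :: complex and n :: nat
  assumes "1 < n" and "primitive_root_of_unity n q"
  shows "\<exists>P. hopf_pairing q n P \<and>
     P [GX] [GF] = 1 \<and> P [GT] [GK] = q \<and> P [GY] [GE] = 1 \<and>
     (\<forall>i j k i' j' k'. i < n \<longrightarrow> j < n \<longrightarrow> k < n \<longrightarrow> i' < n \<longrightarrow> j' < n \<longrightarrow> k' < n \<longrightarrow>
        P (monoA i j k) (monoU i' j' k') =
          (if i = i' \<and> k = k' then q ^ (j * j') * qfact (inverse q) i * qfact q k else 0)) \<and>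
     (\<forall>i j k i' j' k'. i < n \<longrightarrow> j < n \<longrightarrow> k < n \<longrightarrow> i' < n \<longrightarrow> j' < n \<longrightarrow> k' < n \<longrightarrow>
        pairL P (dual_elt q n i j k) (monoU i' j' k') =
          (if i = i' \<and> j = j' \<and> k = k' then 1 else 0))"
  proof -
  interpret prim q n using assms by unfold_locales
  show ?thesis by (rule main)
qed

end
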